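(* Suppose Assumptions (A1)–(A3) hold. Let $a<1/U_L$ and $$\lambda:=\sqrt{\frac{8\sigma}{c\,a\,n^{2/3}}\big[\ln(n^{1/3}p)+\tilde\zeta\big]}.$$ Let $\hat\beta\in\mathbb R^p$ with $\|\hat\beta\|_\infty\le R$ satisfy S$^3$ONC$(\mathbf Z_1^n)$ almost surely. There are universal constants $\tilde c,C_3,C_4>0$ such that: (i) For any $\Gamma\ge0$, assume $$n>C_3\Big[\Big(\tfrac{\Gamma+\hat\varepsilon}{\sigma}\Big)^3+s\big(\ln(n^{1/3}p)+\tilde\zeta\big)\Big]$$ and assume $\mathcal L_{n,\lambda}(\hat\beta,\mathbf Z_1^n)\le\mathcal L_{n,\lambda}(\beta^*_{\hat\varepsilon},\mathbf Z_1^n)+\Gamma$ almost surely. Then, with probability at least $1-2(p+1)e^{-\tilde cn}-6e^{-2cn^{1/3}}$, $$\mathbb L(\hat\beta)-\mathbb L(\beta^* )\le C_3\sigma\Big[\tfrac{s(\ln(n^{1/3}p)+\tilde\zeta)}{n^{2/3}}+\sqrt{\tfrac{s(\ln(n^{1/3}p)+\tilde\zeta)}{n}}+\tfrac1{n^{1/3}}\Big]+C_3\sqrt{\tfrac{\sigma(\Gamma+\hat\varepsilon)}{n^{1/3}}}+\Gamma+\hat\varepsilon.$$ (ii) Assume $$n>C_4\Big(\tfrac{\hat\varepsilon}{\sigma}\Big)^3+C_4\,a^{-1}\big[\ln(n^{1/3}p)+\tilde\zeta\big]s^{3/2}R^{3/2}$$ and assume $\mathcal L_{n,\lambda}(\hat\beta,\mathbf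 Z_1^n)\le\mathcal L_{n,\lambda}(\hat\beta^{\ell_1},\mathbf Z_1^n)$ almost surely. Then, with probability at least $1-2(p+1)e^{-\tilde cn}-6e^{-2cn^{1/3}}$, $$\mathbb L(\hat\beta)-\mathbb L(\beta^* )\le C_4a^{-1/2}s\sigma\Big[\tfrac{\ln(n^{1/3}p)+\tilde\zeta}{n^{2/3}}+\tfrac{R\sqrt{\ln(n^{1/3}p)+\tilde\zeta}}{n^{1/3}}\Big]+C_4\sqrt{\tfrac{\sigma\hat\varepsilon}{n^{1/3}}}+\hat\varepsilon.$$
   Context: Standing setup. Let $Z_1,\dots,Z_n$ be i.i.d. random samples with support $\mathcal W\subseteq\mathbb R^q$, and write $\mathbf Z_1^n=(Z_1,\dots,Z_n)$. Let $L:\mathbb R^p\times\mathcal W\to\mathbb R$ (with $p>2$) be measurable and deterministic. Define $\mathcal L_n(\beta,\mathbf Z_1^n)=\frac1n\sum_{i=1}^nL(\beta,Z_i)$ and $\mathbb L(\beta)=\mathbb E[\mathcal L_n(\beta,\mathbf Z_1^n)]$. Let $\beta^*\in\arg\min_{\beta\in\mathbb R^p}\mathbb L(\beta)$, with $\|\beta^*\|_\infty\le R$ for some $R\ge1$. Assume $L(\cdot,z)$ is continuously differentiable for a.e. $z$, with coordinatewise Lipschitz partial derivatives of constant $U_L\ge1$: $$\Big|\partial_{\beta_j}\mathcal L_n(\tilde\beta+\delta e_j,z)-\partial_{\beta_j}\mathcal L_n(\tilde\beta,z)\Big|\le U_L|\delta|\quad\text{for all }\tilde\beta,\ \delta,\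 j,\ \text{a.e. } z.$$ Penalty. For $\lambda,a>0$, $P_\lambda(\theta)=\int_0^\theta\frac{[a\lambda-t]_+}{a}\,dt$ ($\theta\ge0$), and $\mathcal L_{n,\lambda}(\beta,\mathbf Z_1^n)=\mathcal L_n(\beta,\mathbf Z_1^n)+\sum_jP_\lambda(|\beta_j|)$. Notation. $|\cdot|$ on vectors is the $\ell_1$ norm, $\|\cdot\|$ is the Euclidean norm, and $\|\cdot\|_0$ counts nonzero entries. (A1) (A-sparsity). There is $\beta^*_{\hat\varepsilon}$ with $\|\beta^*_{\hat\varepsilon}\|_\infty\le R$, $s:=\|\beta^*_{\hat\varepsilon}\|_0\ge1$ and $\mathbb L(\beta^*_{\hat\varepsilon})-\mathbb L(\beta^* )\le\hat\varepsilon$, for some $\hat\varepsilon\ge0$. (A2). For every $\beta$, the variables $L(\beta,Z_i)-\mathbb EL(\beta,Z_i)$ are independent and sub-exponential with $\psi_1$-norm $\le\sigma$ ($\sigma\ge1$). Hence there is an absolute constant $c\in(0,0.5]$ with $$\mathbb P\Big(\Big|\sum_ia_i\{L(\beta,Z_i)-\mathbb EL(\beta,Z_i)\}\Big|>\sigma(\|\mathbf a\|\sqrt t+\|\mathbf a\|_\infty t)\Big)\le 2e^{-ct}\quad\text{for all } t\ge0,\ \mathbf a\in\mathbb R^n.$$ (A3). There is a measurable deterministic $\mathcal C:\mathcal W\to\mathbb R_+$ with $\|\mathcal C(Z_i)-\mathbb E\mathcal C(Z_i)\|_{\psi_1}\le\sigma_L$ ($\sigma_L\ge1$), $\mathbb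 E|\mathcal C(Z_i)|\le\mathcal C_\mu$ ($\mathcal C_\mu\ge1$), and $|L(\beta_1,z)-L(\beta_2,z)|\le\mathcal C(z)\|\beta_1-\beta_2\|$ for all $\beta_1,\beta_2$ and a.e. $z$. S$^3$ONC. A vector $\hat\beta$ satisfies S$^3$ONC$(\mathbf Z_1^n)$ if both of the following hold. (a) There exist $g_j$, with $g_j=P_\lambda'(|\hat\beta_j|)\operatorname{sign}(\hat\beta_j)$ if $\hat\beta_j\ne0$ and $g_j\in[-\lambda,\lambda]$ if $\hat\beta_j=0$, such that $\partial_{\beta_j}\mathcal L_n(\hat\beta,\mathbf Z_1^n)+g_j=0$ for all $j$. (b) For every $j$ with $|\hat\beta_j|\in(0,a\lambda)$, $U_L+P_\lambda''(|\hat\beta_j|)\ge0$. Further notation. $\tilde\zeta:=\ln(3eR(\sigma_L+\mathcal C_\mu))$, and $\hat\beta^{\ell_1}\in\arg\min_\beta\{\mathcal L_n(\beta,\mathbf Z_1^n)+\lambda|\beta|\}$. *)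

theory Defs
  imports "HOL-Probability.Probability"
begin

text \<open>Vectors of R^p are represented as functions nat => real vanishing from index p on.
  This keeps the dimension p a term (not a type), so that the universal constants of the
  theorem can be quantified before p.\<close>

definition vecs :: "nat \<Rightarrow> (nat \<Rightarrow> real) set" where
  "vecs p = {b. \<forall>j\<ge>p. b j = 0}"

definition l2norm :: "nat \<Rightarrow> (nat \<Rightarrow> real) \<Rightarrow> real" where
  "l2norm p b = sqrt (\<Sum>j<p. (b j)\<^sup>2)"

definition l1norm :: "nat \<Rightarrow> (nat \<Rightarrow> real) \<Rightarrow> real" where
  "l1norm p b = (\<Sum>j<p. \<bar>b j\<bar>)"

definition linfnorm :: "nat \<Rightarrow> (nat \<Rightarrow> real) \<Rightarrow> real" where
  "linfnorm p b = Max ((\<lambda>j. \<bar>b j\<bar>) ` {..<p})"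

definition l0norm :: "nat \<Rightarrow> (nat \<Rightarrow> real) \<Rightarrow> nat" where
  "l0norm p b = card {j. j < p \<and> b j \<noteq> 0}"

definition partial_deriv :: "((nat \<Rightarrow> real) \<Rightarrow> real) \<Rightarrow> (nat \<Rightarrow> real) \<Rightarrow> nat \<Rightarrow> real" where
  "partial_deriv f b j = deriv (\<lambda>t. f (b(j := b j + t))) 0"

definition C1_vecs :: "nat \<Rightarrow> ((nat \<Rightarrow> real) \<Rightarrow> real) \<Rightarrow> bool" where
  "C1_vecs p f \<longleftrightarrow> (\<exists>G. (\<forall>b\<in>vecs p. G b \<in> vecs p) \<and>
     (\<forall>b\<in>vecs p. \<forall>e>0. \<exists>d>0. \<forall>h\<in>vecs p. l2norm p h < d \<longrightarrow>
        \<bar>f (\<lambda>k. b k + h k) - f b - (\<Sum>j<p. G b j * h j)\<bar> \<le> e * l2norm p h) \<and>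
     (\<forall>b\<in>vecs p. \<forall>e>0. \<exists>d>0. \<forall>b'\<in>vecs p. l2norm p (\<lambda>k. b' k - b k) < d \<longrightarrow>
        l2norm p (\<lambda>k. G b' k - G b k) < e))"

definition Pen :: "real \<Rightarrow> real \<Rightarrow> real \<Rightarrow> real" where
  "Pen lam a \<theta> = integral {0..\<theta>} (\<lambda>t. max (a * lam - t) 0 / a)"

definition emp_loss :: "nat \<Rightarrow> ((nat \<Rightarrow> real) \<Rightarrow> 'w \<Rightarrow> real) \<Rightarrow> (nat \<Rightarrow> 'm \<Rightarrow> 'w) \<Rightarrow> 'm
    \<Rightarrow> (nat \<Rightarrow> real) \<Rightarrow> real" where
  "emp_loss n L Z \<omega> b = (1 / real n) * (\<Sum>i<n. L b (Z i \<omega>))"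

definition pop_loss :: "'m measure \<Rightarrow> nat \<Rightarrow> ((nat \<Rightarrow> real) \<Rightarrow> 'w \<Rightarrow> real) \<Rightarrow> (nat \<Rightarrow> 'm \<Rightarrow> 'w)
    \<Rightarrow> (nat \<Rightarrow> real) \<Rightarrow> real" where
  "pop_loss M n L Z b = (\<integral>\<omega>. emp_loss n L Z \<omega> b \<partial>M)"

definition pen_loss :: "nat \<Rightarrow> real \<Rightarrow> real \<Rightarrow> nat \<Rightarrow> ((nat \<Rightarrow> real) \<Rightarrow> 'w \<Rightarrow> real)
    \<Rightarrow> (nat \<Rightarrow> 'm \<Rightarrow> 'w) \<Rightarrow> 'm \<Rightarrow> (nat \<Rightarrow> real) \<Rightarrow> real" where
  "pen_loss p lam a n L Z \<omega> b = emp_loss n L Z \<omega> b + (\<Sum>j<p. Pen lam a \<bar>b j\<bar>)"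

definition S3ONC :: "nat \<Rightarrow> real \<Rightarrow> real \<Rightarrow> real \<Rightarrow> ((nat \<Rightarrow> real) \<Rightarrow> real) \<Rightarrow> (nat \<Rightarrow> real) \<Rightarrow> bool" where
  "S3ONC p UL lam a f b \<longleftrightarrow>
     (\<exists>g::nat \<Rightarrow> real. \<forall>j<p.
        (b j \<noteq> 0 \<longrightarrow> g j = deriv (Pen lam a) \<bar>b j\<bar> * sgn (b j)) \<and>
        (b j = 0 \<longrightarrow> g j \<in> {-lam..lam}) \<and>
        partial_deriv f b j + g j = 0) \<and>
     (\<forall>j<p. \<bar>b j\<bar> \<in> {0<..<a * lam} \<longrightarrow> UL + deriv (deriv (Pen lam a)) \<bar>b j\<bar> \<ge> 0)"

definition psi1_norm :: "'m measure \<Rightarrow> ('m \<Rightarrow> real) \<Rightarrow> ereal" where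
  "psi1_norm M X = Inf (ereal ` {t. t > 0 \<and> (\<integral>\<^sup>+\<omega>. ennreal (exp (\<bar>X \<omega>\<bar> / t)) \<partial>M) \<le> 2})"

end

theory Submission
  imports Defs
begin


lemma Pen_small:
  assumes a: "a > 0" and t0: "0 \<le> \<theta>" and t1: "\<theta> \<le> a*lam"
  shows "Pen lam a \<theta> = lam*\<theta> - \<theta>\<^sup>2/(2*a)"
proof -
  have "integral {0..\<theta>} (\<lambda>t. max (a * lam - t) 0 / a) = integral {0..\<theta>} (\<lambda>t. lam - t/a)"
  proof (rule integral_cong)
    fix t assume "t \<in> {0..\<theta>}"
    then have "max (a*lam - t) 0 = a*lam - t" using t1 by auto
    then show "max (a * lam - t) 0 / a = lam - t/a" using a by (simp add: field_simps)
  qed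
  moreover have "((\<lambda>t. lam - t/a) has_integral ((lam*\<theta> - \<theta>\<^sup>2/(2*a)) - (lam*0 - 0\<^sup>2/(2*a)))) {0..\<theta>}"
  proof (rule fundamental_theorem_of_calculus[OF t0])
    fix x assume "x \<in> {0..\<theta>}"
    have "((\<lambda>t. lam*t - t\<^sup>2/(2*a)) has_real_derivative (lam - x/a)) (at x within {0..\<theta>})"
      using a by (auto intro!: derivative_eq_intros simp: field_simps power2_eq_square)
    then show "((\<lambda>t. lam*t - t\<^sup>2/(2*a)) has_vector_derivative (lam - x/a)) (at x within {0..\<theta>})"
      by (simp add: has_real_derivative_iff_has_vector_derivative)
  qed
  ultimately show ?thesis unfolding Pen_def by (simp add: integral_unique)
qed

lemma Pen_big:
  assumes a: "a > 0" and l: "lam \<ge> 0" and t1: "a*lam \<le> \<theta>"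
  shows "Pen lam a \<theta> = a*lam\<^sup>2/2"
proof -
  let ?f = "\<lambda>t. max (a * lam - t) 0 / a"
  have al: "0 \<le> a*lam" using a l by simp
  have int: "?f integrable_on {0..\<theta>}"
    by (rule integrable_continuous_interval) (intro continuous_intros, use a in auto)
  have "integral {0..a*lam} ?f + integral {a*lam..\<theta>} ?f = integral {0..\<theta>} ?f"
    by (rule Henstock_Kurzweil_Integration.integral_combine[OF al t1 int])
  moreover have "integral {a*lam..\<theta>} ?f = integral {a*lam..\<theta>} (\<lambda>t. 0)"
    by (rule integral_cong) auto
  moreover have "integral {0..a*lam} ?f = lam*(a*lam) - (a*lam)\<^sup>2/(2*a)"
    using Pen_small[OF a al order_refl] unfolding Pen_def .
  ultimately show ?thesis unfolding Pen_def using a by (simp add: power2_eq_square field_simps)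
qed

lemma Pen_le_lin:
  assumes a: "a > 0" and l: "lam \<ge> 0" and t0: "0 \<le> \<theta>"
  shows "Pen lam a \<theta> \<le> lam*\<theta>"
proof (cases "\<theta> \<le> a*lam")
  case True then show ?thesis using Pen_small[OF a t0 True] a by simp
next
  case False
  then have "a*lam*lam \<le> \<theta>*lam" using l by (intro mult_right_mono) auto
  moreover have "0 \<le> a*lam*lam" using a l by simp
  ultimately show ?thesis using Pen_big[OF a l, of \<theta>] False by (simp add: power2_eq_square algebra_simps)
qed

lemma Pen_le_max:
  assumes a: "a > 0" and l: "lam \<ge> 0" and t0: "0 \<le> \<theta>"
  shows "Pen lam a \<theta> \<le> a*lam\<^sup>2/2"
proof (cases "\<theta> \<le> a*lam")
  case True
  have "0 \<le> (a*lam - \<theta>)\<^sup>2" by simp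
  then have "lam*\<theta> - \<theta>\<^sup>2/(2*a) \<le> a*lam\<^sup>2/2" using a
    by (simp add: field_simps power2_eq_square)
  then show ?thesis using Pen_small[OF a t0 True] by simp
next
  case False then show ?thesis using Pen_big[OF a l] by simp
qed

lemma Pen_zero: "Pen lam a 0 = 0" unfolding Pen_def by simp

lemma Pen_dd:
  assumes a: "a > 0" and x: "0 < x" "x < a*lam"
  shows "deriv (deriv (Pen lam a)) x = -1/a"
proof -
  let ?S = "{0<..<a*lam}"
  have d1: "deriv (Pen lam a) y = lam - y/a" if y: "y \<in> ?S" for y
  proof -
    have "((\<lambda>t. lam*t - t\<^sup>2/(2*a)) has_real_derivative (lam - y/a)) (at y)"
      using a by (auto intro!: derivative_eq_intros simp: field_simps power2_eq_square)
    then have "(Pen lam a has_real_derivative (lam - y/a)) (at y)"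
    proof (rule has_field_derivative_transform_within_open[where S="?S"])
      show "open ?S" by simp
      show "y \<in> ?S" by (rule y)
      show "\<And>t. t \<in> ?S \<Longrightarrow> lam*t - t\<^sup>2/(2*a) = Pen lam a t"
        using Pen_small[OF a] by auto
    qed
    then show ?thesis by (rule DERIV_imp_deriv)
  qed
  have "((\<lambda>t. lam - t/a) has_real_derivative (-1/a)) (at x)"
    using a by (auto intro!: derivative_eq_intros simp: field_simps)
  then have "(deriv (Pen lam a) has_real_derivative (-1/a)) (at x)"
  proof (rule has_field_derivative_transform_within_open[where S="?S"])
    show "open ?S" by simp
    show "x \<in> ?S" using x by simp
    show "\<And>t. t \<in> ?S \<Longrightarrow> lam - t/a = deriv (Pen lam a) t" using d1 by simp
  qed
  then show ?thesis by (rule DERIV_imp_deriv)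
qed




definition grid :: "nat \<Rightarrow> real set \<Rightarrow> (nat \<Rightarrow> real) set" where
  "grid p V = {g. (\<forall>j\<ge>p. g j = 0) \<and> (\<forall>j<p. g j \<in> V)}"

lemma grid_Suc: "grid (Suc p) V = (\<lambda>(v,g). g(p:=v)) ` (V \<times> grid p V)"
proof (intro set_eqI iffI)
  fix h assume h: "h \<in> grid (Suc p) V"
  have "h(p:=0) \<in> grid p V" using h unfolding grid_def
    by (auto simp: less_Suc_eq)
  moreover have "h p \<in> V" using h unfolding grid_def by auto
  moreover have "h = (\<lambda>(v,g). g(p:=v)) (h p, h(p:=0))" by simp
  ultimately show "h \<in> (\<lambda>(v,g). g(p:=v)) ` (V \<times> grid p V)" by (intro image_eqI[where x="(h p, h(p:=0))"]) auto
next
  fix h assume "h \<in> (\<lambda>(v,g). g(p:=v)) ` (V \<times> grid p V)"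
  then obtain v g where "v \<in> V" "g \<in> grid p V" "h = g(p:=v)" by auto
  then show "h \<in> grid (Suc p) V" unfolding grid_def by (auto simp: less_Suc_eq)
qed

lemma grid_inj: "inj_on (\<lambda>(v,g). g(p:=v)) (V \<times> grid p V)"
proof (rule inj_onI, clarsimp)
  fix v g v' g'
  assume "g \<in> grid p V" "g' \<in> grid p V" "g(p:=v) = g'(p:=v')"
  moreover have "g p = 0" "g' p = 0" using calculation unfolding grid_def by auto
  ultimately show "v = v' \<and> g = g'"
    by (metis fun_upd_eqD fun_upd_idem fun_upd_upd)
qed

lemma l0_upd:
  assumes "g p = 0"
  shows "l0norm (Suc p) (g(p:=v)) = l0norm p g + (if v = 0 then 0 else 1)"
proof -
  have "{j. j < Suc p \<and> (g(p:=v)) j \<noteq> 0} = {j. j < p \<and> g j \<noteq> 0} \<union> (if v = 0 then {} else {p})"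
    using assms by (auto simp: less_Suc_eq)
  moreover have "finite {j. j < p \<and> g j \<noteq> 0}" by simp
  ultimately show ?thesis unfolding l0norm_def by auto
qed

lemma grid_sum:
  fixes x :: real
  assumes V: "finite V" "0 \<in> V"
  shows "finite (grid p V) \<and> (\<Sum>g\<in>grid p V. x ^ l0norm p g) = (1 + x*(real (card V) - 1))^p"
proof (induction p)
  case 0
  have "grid 0 V = {\<lambda>_. 0}" unfolding grid_def by auto
  then show ?case by (simp add: l0norm_def)
next
  case (Suc p)
  have fin: "finite (grid (Suc p) V)" unfolding grid_Suc using Suc V by auto
  have sV: "(\<Sum>v\<in>V. (if v = 0 then 1 else x)) = 1 + x*(real (card V) - 1)"
  proof -
    have "(\<Sum>v\<in>V. (if v = 0 then 1 else x)) = (\<Sum>v\<in>insert 0 (V-{0}). (if v = 0 then 1 else x))"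
      using V by (simp add: insert_absorb)
    also have "\<dots> = 1 + (\<Sum>v\<in>V-{0}. x)" using V by (subst sum.insert) auto
    also have "\<dots> = 1 + x*(real (card V) - 1)"
    proof -
      have "card V \<ge> 1" using V by (metis One_nat_def Suc_leI card_gt_0_iff empty_iff)
      then have "real (card (V-{0})) = real (card V) - 1" using V by (simp add: card_Diff_singleton of_nat_diff)
      then show ?thesis by (simp add: mult.commute)
    qed
    finally show ?thesis .
  qed
  have "(\<Sum>h\<in>grid (Suc p) V. x ^ l0norm (Suc p) h)
      = (\<Sum>vg\<in>V \<times> grid p V. x ^ l0norm (Suc p) ((\<lambda>(v,g). g(p:=v)) vg))"
    unfolding grid_Suc by (rule sum.reindex[OF grid_inj, unfolded comp_def])
  also have "\<dots> = (\<Sum>vg\<in>V \<times> grid p V. (if fst vg = 0 then 1 else x) * x ^ l0norm p (snd vg))"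
  proof (rule sum.cong[OF refl])
    fix vg assume "vg \<in> V \<times> grid p V"
    then obtain v g where vg: "vg = (v,g)" "v \<in> V" "g \<in> grid p V" by auto
    then have "g p = 0" unfolding grid_def by auto
    then show "x ^ l0norm (Suc p) ((\<lambda>(v,g). g(p:=v)) vg) = (if fst vg = 0 then 1 else x) * x ^ l0norm p (snd vg)"
      by (simp add: l0_upd vg power_add)
  qed
  also have "\<dots> = (\<Sum>v\<in>V. (if v = 0 then 1 else x)) * (\<Sum>g\<in>grid p V. x ^ l0norm p g)"
    by (simp add: sum_product sum.cartesian_product case_prod_beta)
  finally show ?case using fin Suc sV by simp
qed




lemma Lmeas:
  assumes Zm: "Z i \<in> measurable M borel" and Lm: "(\<lambda>(b, z). L b z) \<in> borel_measurable (borel \<Otimes>\<^sub>M borel)"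
  shows "(\<lambda>\<omega>. L b (Z i \<omega>)) \<in> borel_measurable M"
proof -
  have "(\<lambda>\<omega>. (b, Z i \<omega>)) \<in> M \<rightarrow>\<^sub>M borel \<Otimes>\<^sub>M borel"
    by (intro measurable_Pair measurable_const Zm) simp
  from measurable_comp[OF this Lm] show ?thesis by (simp add: comp_def)
qed

lemma pop_expand:
  assumes "\<forall>i<n. integrable M (\<lambda>\<omega>. L b (Z i \<omega>))"
  shows "pop_loss M n L Z b = (1/real n) * (\<Sum>i<n. \<integral>\<omega>. L b (Z i \<omega>) \<partial>M)"
  unfolding pop_loss_def emp_loss_def using assms by (simp add: integral_sum)

lemma dev_expand:
  assumes "\<forall>i<n. integrable M (\<lambda>\<omega>. L b (Z i \<omega>))"
  shows "emp_loss n L Z \<omega> b - pop_loss M n L Z b = (\<Sum>i<n. (1/real n) * (L b (Z i \<omega>) - (\<integral>\<omega>'. L b (Z i \<omega>') \<partial>M)))"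
  unfolding pop_expand[of n M L b Z, OF assms] emp_loss_def
  by (simp add: sum_distrib_left sum_subtractf right_diff_distrib)

lemma sqrt_sum_inv:
  assumes "n \<ge> (1::nat)"
  shows "sqrt (\<Sum>i<n. (1/real n)\<^sup>2) = 1 / sqrt (real n)"
proof -
  have "(\<Sum>i<n. (1/real n)\<^sup>2) = 1/real n" using assms by (simp add: power2_eq_square)
  then show ?thesis by (simp add: real_sqrt_divide)
qed

lemma Max_inv:
  assumes "n \<ge> (1::nat)"
  shows "Max ((\<lambda>i. \<bar>1/real n\<bar>) ` {..<n}) = 1/real n"
proof -
  have "0 \<in> {..<n}" using assms by simp
  then have "(\<lambda>i. \<bar>1/real n\<bar>) ` {..<n} = {1/real n}" by (subst image_constant) auto
  then show ?thesis by simp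
qed

lemma pop_lip:
  assumes P: "prob_space M" and n: "n \<ge> 1"
    and i1: "\<forall>i<n. integrable M (\<lambda>\<omega>. L b1 (Z i \<omega>))"
    and i2: "\<forall>i<n. integrable M (\<lambda>\<omega>. L b2 (Z i \<omega>))"
    and Cfint: "\<forall>i<n. integrable M (\<lambda>\<omega>. Cf (Z i \<omega>))"
    and Cfmean: "\<forall>i<n. (\<integral>\<omega>. \<bar>Cf (Z i \<omega>)\<bar> \<partial>M) \<le> C\<mu>"
    and Lip: "\<forall>i<n. AE \<omega> in M. \<bar>L b1 (Z i \<omega>) - L b2 (Z i \<omega>)\<bar> \<le> Cf (Z i \<omega>) * d"
    and d: "d \<ge> 0"
  shows "\<bar>pop_loss M n L Z b1 - pop_loss M n L Z b2\<bar> \<le> C\<mu> * d"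
proof -
  have "pop_loss M n L Z b1 - pop_loss M n L Z b2
      = (1/real n) * (\<Sum>i<n. \<integral>\<omega>. L b1 (Z i \<omega>) - L b2 (Z i \<omega>) \<partial>M)"
    unfolding pop_expand[of n M L b1 Z, OF i1] pop_expand[of n M L b2 Z, OF i2] using i1 i2
    by (simp add: right_diff_distrib sum_subtractf)
  also have "\<bar>\<dots>\<bar> \<le> (1/real n) * (\<Sum>i<n. C\<mu> * d)"
  proof -
    have "\<bar>\<Sum>i<n. \<integral>\<omega>. L b1 (Z i \<omega>) - L b2 (Z i \<omega>) \<partial>M\<bar> \<le> (\<Sum>i<n. \<bar>\<integral>\<omega>. L b1 (Z i \<omega>) - L b2 (Z i \<omega>) \<partial>M\<bar>)"
      by (rule sum_abs)
    also have "\<dots> \<le> (\<Sum>i<n. C\<mu> * d)"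
    proof (rule sum_mono)
      fix i assume "i \<in> {..<n}"
      then have i: "i < n" by simp
      have "\<bar>\<integral>\<omega>. L b1 (Z i \<omega>) - L b2 (Z i \<omega>) \<partial>M\<bar> \<le> (\<integral>\<omega>. \<bar>L b1 (Z i \<omega>) - L b2 (Z i \<omega>)\<bar> \<partial>M)"
        by (rule integral_abs_bound)
      also have "\<dots> \<le> (\<integral>\<omega>. Cf (Z i \<omega>) * d \<partial>M)"
        by (rule integral_mono_AE) (use i i1 i2 Cfint Lip in auto)
      also have "\<dots> = (\<integral>\<omega>. Cf (Z i \<omega>) \<partial>M) * d" by simp
      also have "\<dots> \<le> C\<mu> * d"
      proof (rule mult_right_mono[OF _ d])
        have "(\<integral>\<omega>. Cf (Z i \<omega>) \<partial>M) \<le> (\<integral>\<omega>. \<bar>Cf (Z i \<omega>)\<bar> \<partial>M)"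
          by (rule integral_mono) (use i Cfint in auto)
        moreover have "(\<integral>\<omega>. \<bar>Cf (Z i \<omega>)\<bar> \<partial>M) \<le> C\<mu>" using Cfmean i by blast
        ultimately show "(\<integral>\<omega>. Cf (Z i \<omega>) \<partial>M) \<le> C\<mu>" by linarith
      qed
      finally show "\<bar>\<integral>\<omega>. L b1 (Z i \<omega>) - L b2 (Z i \<omega>) \<partial>M\<bar> \<le> C\<mu> * d" .
    qed
    finally have H: "\<bar>\<Sum>i<n. \<integral>\<omega>. L b1 (Z i \<omega>) - L b2 (Z i \<omega>) \<partial>M\<bar> \<le> (\<Sum>i<n. C\<mu> * d)" .
    show ?thesis unfolding abs_mult by (rule mult_mono[OF _ H]) auto
  qed
  also have "\<dots> = C\<mu> * d" using n by simp
  finally show ?thesis .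
qed

definition rd :: "real \<Rightarrow> real \<Rightarrow> real" where
  "rd \<delta> y = sgn y * \<delta> * of_int \<lfloor>\<bar>y\<bar>/\<delta>\<rfloor>"

lemma rd_props:
  assumes d: "\<delta> > 0" and y: "\<bar>y\<bar> \<le> R"
  shows "rd \<delta> 0 = 0" "\<bar>y - rd \<delta> y\<bar> \<le> \<delta>"
    "rd \<delta> y \<in> (\<lambda>k. \<delta> * of_int k) ` {-\<lfloor>R/\<delta>\<rfloor>..\<lfloor>R/\<delta>\<rfloor>}"
proof -
  show "rd \<delta> 0 = 0" by (simp add: rd_def)
  let ?k = "\<lfloor>\<bar>y\<bar>/\<delta>\<rfloor>"
  have k0: "0 \<le> ?k" using d by simp
  have k1: "?k \<le> \<lfloor>R/\<delta>\<rfloor>" using d y by (intro floor_mono divide_right_mono) auto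
  have f1: "of_int ?k \<le> \<bar>y\<bar>/\<delta>" and f2: "\<bar>y\<bar>/\<delta> < of_int ?k + 1" by linarith+
  have e1: "\<delta> * of_int ?k \<le> \<bar>y\<bar>" using mult_left_mono[OF f1, of \<delta>] d by simp
  have e2: "\<bar>y\<bar> < \<delta> * of_int ?k + \<delta>" using mult_strict_left_mono[OF f2 d] d by (simp add: algebra_simps)
  have "\<bar>\<bar>y\<bar> - \<delta> * of_int ?k\<bar> \<le> \<delta>" using e1 e2 by linarith
  moreover have "y - rd \<delta> y = sgn y * (\<bar>y\<bar> - \<delta> * of_int ?k)" unfolding rd_def
    by (simp add: algebra_simps sgn_mult_abs) (metis abs_mult_sgn mult.commute)
  moreover have "\<bar>sgn y\<bar> \<le> (1::real)" by (simp add: abs_sgn_eq)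
  ultimately show "\<bar>y - rd \<delta> y\<bar> \<le> \<delta>"
    by (simp add: abs_mult) (metis abs_ge_zero mult_le_one mult_mono mult.left_neutral order_trans)
  show "rd \<delta> y \<in> (\<lambda>k. \<delta> * of_int k) ` {-\<lfloor>R/\<delta>\<rfloor>..\<lfloor>R/\<delta>\<rfloor>}"
  proof (cases "y \<ge> 0")
    case True
    then have "rd \<delta> y = \<delta> * of_int ?k" unfolding rd_def by (cases "y = 0") auto
    moreover have "?k \<in> {-\<lfloor>R/\<delta>\<rfloor>..\<lfloor>R/\<delta>\<rfloor>}" using k0 k1 unfolding atLeastAtMost_iff by linarith
    ultimately show ?thesis by (intro image_eqI[where x="?k"])
  next
    case False
    then have "rd \<delta> y = \<delta> * of_int (- ?k)" unfolding rd_def by auto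
    moreover have "-?k \<in> {-\<lfloor>R/\<delta>\<rfloor>..\<lfloor>R/\<delta>\<rfloor>}" using k0 k1 unfolding atLeastAtMost_iff by linarith
    ultimately show ?thesis by (intro image_eqI[where x="-?k"])
  qed
qed




lemma set_meas:
  fixes f :: "nat \<Rightarrow> 'a \<Rightarrow> real"
  assumes "\<forall>i<n. f i \<in> borel_measurable M"
  shows "{\<omega>\<in>space M. \<bar>\<Sum>i<n. v i * (f i \<omega> - k i)\<bar> > T} \<in> sets M"
proof -
  have h: "(\<lambda>\<omega>. \<Sum>i<n. v i * (f i \<omega> - k i)) \<in> borel_measurable M"
  proof (rule borel_measurable_sum[where f="\<lambda>i \<omega>. v i * (f i \<omega> - k i)"])
    fix i assume "i \<in> {..<n}"
    then have [measurable]: "f i \<in> borel_measurable M" using assms by auto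
    show "(\<lambda>\<omega>. v i * (f i \<omega> - k i)) \<in> borel_measurable M" by measurable
  qed
  have "(\<lambda>\<omega>. \<bar>\<Sum>i<n. v i * (f i \<omega> - k i)\<bar>) \<in> borel_measurable M"
    using h by measurable
  then show ?thesis unfolding borel_measurable_iff_greater by blast
qed

lemma exp_half_le: "exp (1/2::real) \<le> 2"
proof -
  have "exp (1/2::real) * exp (1/2) = exp 1" by (simp flip: exp_add)
  also have "\<dots> \<le> 4" using exp_le by simp
  finally have "exp (1/2::real) ^ 2 \<le> 2 ^ 2" by (simp add: power2_eq_square)
  then show ?thesis by (rule power2_le_imp_le) simp
qed

lemma pow_bound:
  fixes y :: real
  assumes "0 \<le> y" "y * real p \<le> 1/2"
  shows "(1 + y) ^ p \<le> 2"
proof -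
  have "(1 + y) ^ p \<le> exp y ^ p" using assms by (intro power_mono) (auto simp: exp_ge_add_one_self)
  also have "\<dots> = exp (real p * y)" by (simp add: exp_of_nat_mult)
  also have "\<dots> \<le> exp (1/2)" using assms by (simp add: mult.commute)
  also have "\<dots> \<le> 2" by (rule exp_half_le)
  finally show ?thesis .
qed




lemma ge1_mult: "(x::real) \<ge> 1 \<Longrightarrow> y \<ge> 1 \<Longrightarrow> x*y \<ge> 1"
  using mult_mono[of 1 x 1 y] by simp

lemma le_cube: "(x::real) \<ge> 1 \<Longrightarrow> x \<le> x^3"
proof -
  assume x: "x \<ge> 1"
  have "x * 1 \<le> x * (x * x)" using x ge1_mult[OF x x] by (intro mult_left_mono) auto
  then show ?thesis by (simp add: power3_eq_cube)
qed

lemma good_event: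
  fixes M :: "'m measure" and Z :: "nat \<Rightarrow> 'm \<Rightarrow> (nat \<Rightarrow> real)"
    and L :: "(nat \<Rightarrow> real) \<Rightarrow> (nat \<Rightarrow> real) \<Rightarrow> real" and Cf :: "(nat \<Rightarrow> real) \<Rightarrow> real"
    and Q :: "'m \<Rightarrow> bool"
  assumes P: "prob_space M" and c: "c > 0" and n: "n \<ge> 1" and p: "p \<ge> 1"
    and Zm: "\<forall>i<n. Z i \<in> measurable M borel"
    and Lm: "(\<lambda>(b, z). L b z) \<in> borel_measurable (borel \<Otimes>\<^sub>M borel)"
    and Lint: "\<forall>i<n. \<forall>b\<in>vecs p. integrable M (\<lambda>\<omega>. L b (Z i \<omega>))"
    and R: "R \<ge> 1" and sig: "\<sigma> \<ge> 1"
    and A2: "\<forall>b\<in>vecs p. \<forall>t\<ge>0. \<forall>v :: nat \<Rightarrow> real.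
          measure M {\<omega>\<in>space M. \<bar>\<Sum>i<n. v i * (L b (Z i \<omega>) - (\<integral>\<omega>'. L b (Z i \<omega>') \<partial>M))\<bar>
             > \<sigma> * (sqrt (\<Sum>i<n. (v i)\<^sup>2) * sqrt t + Max ((\<lambda>i. \<bar>v i\<bar>) ` {..<n}) * t)}
          \<le> 2 * exp (- c * t)"
    and Cfm: "Cf \<in> borel_measurable borel" and sL: "\<sigma>L \<ge> 1" and Cmu: "C\<mu> \<ge> 1"
    and Cfint: "\<forall>i<n. integrable M (\<lambda>\<omega>. Cf (Z i \<omega>))"
    and Cfmean: "\<forall>i<n. (\<integral>\<omega>. \<bar>Cf (Z i \<omega>)\<bar> \<partial>M) \<le> C\<mu>"
    and A3: "\<forall>t\<ge>0. \<forall>v :: nat \<Rightarrow> real.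
          measure M {\<omega>\<in>space M. \<bar>\<Sum>i<n. v i * (Cf (Z i \<omega>) - (\<integral>\<omega>'. Cf (Z i \<omega>') \<partial>M))\<bar>
             > \<sigma>L * (sqrt (\<Sum>i<n. (v i)\<^sup>2) * sqrt t + Max ((\<lambda>i. \<bar>v i\<bar>) ` {..<n}) * t)}
          \<le> 2 * exp (- c * t)"
    and Lip: "\<forall>i<n. AE \<omega> in M. \<forall>b1\<in>vecs p. \<forall>b2\<in>vecs p.
          \<bar>L b1 (Z i \<omega>) - L b2 (Z i \<omega>)\<bar> \<le> Cf (Z i \<omega>) * l2norm p (\<lambda>k. b1 k - b2 k)"
    and Q: "AE \<omega> in M. Q \<omega>"
    and Lg: "Lg = ln (real n powr (1/3) * real p) + ln (3 * exp 1 * R * (\<sigma>L + C\<mu>))"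
  shows "\<exists>A\<in>sets M. measure M A \<ge> 1 - 2 * exp (- c * real n) - 4 * exp (- 2 * c * real n powr (1/3)) \<and>
     (\<forall>\<omega>\<in>A. Q \<omega> \<and> (\<forall>b\<in>vecs p. linfnorm p b \<le> R \<longrightarrow>
        \<bar>emp_loss n L Z \<omega> b - pop_loss M n L Z b\<bar> \<le>
          \<sigma> * (sqrt ((2 * real n powr (1/3) + real (l0norm p b) * (3 * Lg / c)) / real n)
               + (2 * real n powr (1/3) + real (l0norm p b) * (3 * Lg / c)) / real n) + 2 / real n))"
proof -
  interpret P: prob_space M by (rule P)
  define N3 where "N3 = real n powr (1/3)"
  have N3pos: "N3 > 0" "N3 \<ge> 1" using n unfolding N3_def by (auto intro: ge_one_powr_ge_zero)
  have N3cube: "N3 ^ 3 = real n" unfolding N3_def using n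
    by (simp add: powr_realpow[symmetric] powr_powr)
  define D where "D = \<sigma>L + C\<mu>"
  have D: "D \<ge> 2" using sL Cmu unfolding D_def by simp
  define \<delta> where "\<delta> = 1 / (real p * real n * D)"
  have \<delta>: "\<delta> > 0" unfolding \<delta>_def using p n D by simp
  define NN where "NN = \<lfloor>R/\<delta>\<rfloor>"
  define V where "V = (\<lambda>k. \<delta> * of_int k) ` {-NN..NN}"
  have NN0: "NN \<ge> 0" unfolding NN_def using \<delta> R by simp
  have Vfin: "finite V" unfolding V_def by simp
  have V0: "0 \<in> V" unfolding V_def using NN0 by (intro image_eqI[where x=0]) auto
  define m where "m = card V"
  have m1: "m \<ge> 1" unfolding m_def using Vfin V0 by (metis One_nat_def Suc_leI card_gt_0_iff empty_iff)
  have mle: "real m \<le> 2 * R / \<delta> + 1"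
  proof -
    have "m \<le> card {-NN..NN}" unfolding m_def V_def by (rule card_image_le) simp
    then have "real m \<le> real (nat (2*NN + 1))" by simp
    also have "\<dots> = 2 * of_int NN + 1" using NN0 by simp
    also have "\<dots> \<le> 2 * (R/\<delta>) + 1" unfolding NN_def using of_int_floor_le[of "R/\<delta>"] by linarith
    finally show ?thesis by simp
  qed
  define G where "G = grid p V"
  have GS: "finite G \<and> (\<Sum>g\<in>G. x ^ l0norm p g) = (1 + x*(real (card V) - 1))^p" for x :: real
    unfolding G_def by (rule grid_sum[OF Vfin V0])
  have Gfin: "finite G" using GS by blast
  have Gvecs: "G \<subseteq> vecs p" unfolding G_def grid_def vecs_def by auto
  define x where "x = 1 / (2 * real p * real m)"
  define \<Lambda> where "\<Lambda> = ln (2 * real p * real m)"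
  have pm1: "2 * real p * real m \<ge> 1"
  proof -
    have "real p * real m \<ge> 1 * 1" using p m1 by (intro mult_mono) auto
    then show ?thesis by simp
  qed
  have \<Lambda>0: "\<Lambda> \<ge> 0" unfolding \<Lambda>_def using pm1 by simp
  have expL: "exp (- \<Lambda>) = x" unfolding \<Lambda>_def x_def using pm1 by (simp add: exp_minus field_simps)
  have x0: "x \<ge> 0" unfolding x_def by simp
  have \<Lambda>le: "\<Lambda> \<le> 3 * Lg"
  proof -
    have RpnD: "R * real p * real n * D \<ge> 1" using R p n D
      by (intro ge1_mult) auto
    have "2 * R / \<delta> = 2 * (R * real p * real n * D)" unfolding \<delta>_def by simp
    then have "real m \<le> 3 * (R * real p * real n * D)" using mle RpnD by linarith
    then have "2 * real p * real m \<le> 2 * real p * (3 * (R * real p * real n * D))"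
      using p by (intro mult_left_mono) auto
    also have "\<dots> \<le> (N3 * real p)^3 * (3 * exp 1 * R * D)^3"
    proof -
      have a1: "real p * real p \<le> real p^3" using p by (simp add: power3_eq_cube)
      have a2: "R \<le> R^3" "D \<le> D^3" using R D by (simp_all add: le_cube)
      have e2: "exp 1 \<ge> (2::real)" using exp_ge_add_one_self[of 1] by simp
      have a3: "6 \<le> (3 * exp 1::real)^3"
      proof -
        have "(6::real) \<le> 6^3" by simp
        also have "\<dots> \<le> (3 * exp 1)^3" using e2 by (intro power_mono) auto
        finally show ?thesis .
      qed
      have "2 * real p * (3 * (R * real p * real n * D)) = 6 * (real p * real p) * real n * R * D" by (simp add: algebra_simps)
      also have "\<dots> \<le> (3 * exp 1)^3 * (real p^3) * real n * R^3 * D^3"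
        using a1 a2 a3 R D n
        by (intro mult_mono mult_nonneg_nonneg zero_le_power) auto
      also have "\<dots> = (N3 * real p)^3 * (3 * exp 1 * R * D)^3" using N3cube by (simp add: power_mult_distrib)
      finally show ?thesis .
    qed
    finally have "\<Lambda> \<le> ln ((N3 * real p)^3 * (3 * exp 1 * R * D)^3)"
      unfolding \<Lambda>_def using p m1 by (intro ln_mono) auto
    also have "\<dots> = 3 * ln (N3 * real p) + 3 * ln (3 * exp 1 * R * D)"
      using N3pos p R D by (simp add: ln_mult ln_realpow)
    finally show ?thesis unfolding Lg N3_def D_def by simp
  qed
  define tg where "tg g = 2 * N3 + real (l0norm p g) * \<Lambda> / c" for g
  have tg0: "tg g \<ge> 0" for g unfolding tg_def using N3pos \<Lambda>0 c by simp
  define vv where "vv = (\<lambda>_::nat. 1 / real n)"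
  have vvs: "sqrt (\<Sum>i<n. (vv i)\<^sup>2) = 1 / sqrt (real n)" unfolding vv_def by (rule sqrt_sum_inv[OF n])
  have vvm: "Max ((\<lambda>i. \<bar>vv i\<bar>) ` {..<n}) = 1 / real n" unfolding vv_def by (rule Max_inv[OF n])
  define B where "B g = {\<omega>\<in>space M. \<bar>\<Sum>i<n. vv i * (L g (Z i \<omega>) - (\<integral>\<omega>'. L g (Z i \<omega>') \<partial>M))\<bar>
             > \<sigma> * (sqrt (\<Sum>i<n. (vv i)\<^sup>2) * sqrt (tg g) + Max ((\<lambda>i. \<bar>vv i\<bar>) ` {..<n}) * tg g)}" for g
  define B1 where "B1 = {\<omega>\<in>space M. \<bar>\<Sum>i<n. vv i * (Cf (Z i \<omega>) - (\<integral>\<omega>'. Cf (Z i \<omega>') \<partial>M))\<bar>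
             > \<sigma>L * (sqrt (\<Sum>i<n. (vv i)\<^sup>2) * sqrt (real n) + Max ((\<lambda>i. \<bar>vv i\<bar>) ` {..<n}) * real n)}"
  have Lmi: "\<forall>i<n. (\<lambda>\<omega>. L g (Z i \<omega>)) \<in> borel_measurable M" for g
  proof (intro allI impI)
    fix i assume "i < n"
    then have "Z i \<in> measurable M borel" using Zm by blast
    then show "(\<lambda>\<omega>. L g (Z i \<omega>)) \<in> borel_measurable M" by (rule Lmeas[OF _ Lm])
  qed
  have Bsets: "B g \<in> sets M" for g unfolding B_def
    by (rule set_meas[where f="\<lambda>i \<omega>. L g (Z i \<omega>)", OF Lmi])
  have Cfmi: "\<forall>i<n. (\<lambda>\<omega>. Cf (Z i \<omega>)) \<in> borel_measurable M"
  proof (intro allI impI)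
    fix i assume "i < n"
    then have "Z i \<in> measurable M borel" using Zm by blast
    then show "(\<lambda>\<omega>. Cf (Z i \<omega>)) \<in> borel_measurable M" using Cfm by (rule measurable_compose)
  qed
  have B1sets: "B1 \<in> sets M" unfolding B1_def
    by (rule set_meas[where f="\<lambda>i \<omega>. Cf (Z i \<omega>)", OF Cfmi])
  have Bm: "measure M (B g) \<le> 2 * exp (- 2 * c * N3) * x ^ l0norm p g" if g: "g \<in> G" for g
  proof -
    have "measure M (B g) \<le> 2 * exp (- c * tg g)" unfolding B_def
      using A2 Gvecs g tg0 by blast
    also have "exp (- c * tg g) = exp (- 2 * c * N3) * exp (- \<Lambda>) ^ l0norm p g"
    proof -
      have "- c * tg g = - 2 * c * N3 + real (l0norm p g) * (- \<Lambda>)" unfolding tg_def using c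
        by (simp add: field_simps)
      then show ?thesis by (simp only: exp_add exp_of_nat_mult)
    qed
    finally show ?thesis unfolding expL by simp
  qed
  have U: "measure M (\<Union>g\<in>G. B g) \<le> 4 * exp (- 2 * c * N3)"
  proof -
    have "measure M (\<Union>g\<in>G. B g) \<le> (\<Sum>g\<in>G. measure M (B g))"
      by (rule P.finite_measure_subadditive_finite[OF Gfin]) (use Bsets in auto)
    also have "\<dots> \<le> (\<Sum>g\<in>G. 2 * exp (- 2 * c * N3) * x ^ l0norm p g)"
      by (rule sum_mono) (rule Bm)
    also have "\<dots> = 2 * exp (- 2 * c * N3) * (1 + x*(real m - 1))^p"
      using GS[of x] unfolding m_def by (simp add: sum_distrib_left[symmetric])
    also have "\<dots> \<le> 2 * exp (- 2 * c * N3) * 2"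
    proof (intro mult_left_mono pow_bound)
      show "0 \<le> x * (real m - 1)" using x0 m1 by simp
      have "x * (real m - 1) * real p = (real m - 1) / (2 * real m)" unfolding x_def using p m1
        by (simp add: field_simps)
      also have "\<dots> \<le> 1/2" using m1 by (simp add: field_simps)
      finally show "x * (real m - 1) * real p \<le> 1/2" .
    qed simp
    finally show ?thesis by simp
  qed
  have B1m: "measure M B1 \<le> 2 * exp (- c * real n)" unfolding B1_def using A3 by simp
  have AEall: "AE \<omega> in M. Q \<omega> \<and> (\<forall>i\<in>{..<n}. \<forall>b1\<in>vecs p. \<forall>b2\<in>vecs p.
          \<bar>L b1 (Z i \<omega>) - L b2 (Z i \<omega>)\<bar> \<le> Cf (Z i \<omega>) * l2norm p (\<lambda>k. b1 k - b2 k))"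
    using Q AE_finite_allI[of "{..<n}" _ M] Lip by (auto intro: eventually_conj)
  then obtain N0 where N0: "\<And>\<omega>. \<omega> \<in> space M - N0 \<Longrightarrow> Q \<omega> \<and> (\<forall>i\<in>{..<n}. \<forall>b1\<in>vecs p. \<forall>b2\<in>vecs p.
          \<bar>L b1 (Z i \<omega>) - L b2 (Z i \<omega>)\<bar> \<le> Cf (Z i \<omega>) * l2norm p (\<lambda>k. b1 k - b2 k))"
    and N0n: "N0 \<in> null_sets M" by (rule AE_E3) blast
  define A where "A = space M - ((B1 \<union> (\<Union>g\<in>G. B g)) \<union> N0)"
  have Usets: "(\<Union>g\<in>G. B g) \<in> sets M" using Gfin Bsets by auto
  have Asets: "A \<in> sets M" unfolding A_def using B1sets Usets N0n by auto
  have Ameas: "measure M A \<ge> 1 - 2 * exp (- c * real n) - 4 * exp (- 2 * c * N3)"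
  proof -
    have e1: "measure M A = 1 - measure M ((B1 \<union> (\<Union>g\<in>G. B g)) \<union> N0)"
      unfolding A_def using B1sets Usets N0n by (intro P.prob_compl) auto
    have e2: "measure M ((B1 \<union> (\<Union>g\<in>G. B g)) \<union> N0) = measure M (B1 \<union> (\<Union>g\<in>G. B g))"
      using B1sets Usets N0n by (intro measure_Un_null_set) auto
    have e3: "measure M (B1 \<union> (\<Union>g\<in>G. B g)) \<le> measure M B1 + measure M (\<Union>g\<in>G. B g)"
      using B1sets Usets by (intro measure_Un_le)
    show ?thesis using e1 e2 e3 U B1m by linarith
  qed
  show ?thesis
  proof (intro bexI[OF _ Asets] conjI ballI)
    show "measure M A \<ge> 1 - 2 * exp (- c * real n) - 4 * exp (- 2 * c * real n powr (1/3))"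
      using Ameas unfolding N3_def .
    fix \<omega> assume \<omega>: "\<omega> \<in> A"
    then have \<omega>s: "\<omega> \<in> space M - N0" unfolding A_def by auto
    have \<omega>sp: "\<omega> \<in> space M" using \<omega>s by blast
    have \<omega>B1: "\<omega> \<notin> B1" using \<omega> unfolding A_def by auto
    have \<omega>B: "\<omega> \<notin> B g" if "g \<in> G" for g using \<omega> that unfolding A_def by auto
    show "Q \<omega>" using N0[OF \<omega>s] by blast
    have LipW: "\<forall>i<n. \<forall>b1\<in>vecs p. \<forall>b2\<in>vecs p.
          \<bar>L b1 (Z i \<omega>) - L b2 (Z i \<omega>)\<bar> \<le> Cf (Z i \<omega>) * l2norm p (\<lambda>k. b1 k - b2 k)"
      using N0[OF \<omega>s] by blast
    have Cfavg: "(1/real n) * (\<Sum>i<n. Cf (Z i \<omega>)) \<le> C\<mu> + 2 * \<sigma>L"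
    proof -
      have h0: "\<bar>\<Sum>i<n. vv i * (Cf (Z i \<omega>) - (\<integral>\<omega>'. Cf (Z i \<omega>') \<partial>M))\<bar>
             \<le> \<sigma>L * (sqrt (\<Sum>i<n. (vv i)\<^sup>2) * sqrt (real n) + Max ((\<lambda>i. \<bar>vv i\<bar>) ` {..<n}) * real n)"
        using \<omega>B1 \<omega>sp unfolding B1_def by (simp add: not_less)
      have sq: "1 / sqrt (real n) * sqrt (real n) = 1" using n by simp
      have h: "\<bar>\<Sum>i<n. vv i * (Cf (Z i \<omega>) - (\<integral>\<omega>'. Cf (Z i \<omega>') \<partial>M))\<bar> \<le> 2 * \<sigma>L"
        using h0 unfolding vvs vvm sq using n by simp
      have eq: "(\<Sum>i<n. vv i * (Cf (Z i \<omega>) - (\<integral>\<omega>'. Cf (Z i \<omega>') \<partial>M)))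
          = (1/real n) * (\<Sum>i<n. Cf (Z i \<omega>)) - (1/real n) * (\<Sum>i<n. (\<integral>\<omega>'. Cf (Z i \<omega>') \<partial>M))"
        unfolding vv_def by (simp add: sum_distrib_left right_diff_distrib sum_subtractf)
      have "(\<Sum>i<n. (\<integral>\<omega>'. Cf (Z i \<omega>') \<partial>M)) \<le> (\<Sum>i<n. C\<mu>)"
      proof (rule sum_mono)
        fix i assume "i \<in> {..<n}"
        then have i: "i < n" by simp
        have "(\<integral>\<omega>. Cf (Z i \<omega>) \<partial>M) \<le> (\<integral>\<omega>. \<bar>Cf (Z i \<omega>)\<bar> \<partial>M)"
          by (rule integral_mono) (use i Cfint in auto)
        moreover have "(\<integral>\<omega>. \<bar>Cf (Z i \<omega>)\<bar> \<partial>M) \<le> C\<mu>" using Cfmean i by blast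
        ultimately show "(\<integral>\<omega>. Cf (Z i \<omega>) \<partial>M) \<le> C\<mu>" by linarith
      qed
      then have "(1/real n) * (\<Sum>i<n. (\<integral>\<omega>'. Cf (Z i \<omega>') \<partial>M)) \<le> C\<mu>"
        using n by (simp add: field_simps)
      then show ?thesis using h eq by linarith
    qed
    fix b assume b: "b \<in> vecs p"
    show "linfnorm p b \<le> R \<longrightarrow>
        \<bar>emp_loss n L Z \<omega> b - pop_loss M n L Z b\<bar> \<le>
          \<sigma> * (sqrt ((2 * real n powr (1/3) + real (l0norm p b) * (3 * Lg / c)) / real n)
               + (2 * real n powr (1/3) + real (l0norm p b) * (3 * Lg / c)) / real n) + 2 / real n"
    proof (rule impI)
      assume bR: "linfnorm p b \<le> R"
      have bj: "\<bar>b j\<bar> \<le> R" if "j < p" for j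
      proof -
        have "\<bar>b j\<bar> \<le> Max ((\<lambda>j. \<bar>b j\<bar>) ` {..<p})" using that by (intro Max_ge) auto
        then show ?thesis using bR unfolding linfnorm_def by linarith
      qed
      define g where "g = (\<lambda>j. if j < p then rd \<delta> (b j) else 0)"
      have gG: "g \<in> G" unfolding G_def grid_def g_def V_def NN_def using rd_props(3)[OF \<delta> bj] by auto
      have gv: "g \<in> vecs p" using gG Gvecs by auto
      have l0le: "l0norm p g \<le> l0norm p b" unfolding l0norm_def g_def
        by (intro card_mono) (auto simp: rd_def)
      have l2: "l2norm p (\<lambda>k. b k - g k) \<le> 1 / (real n * D)"
      proof -
        have "(\<Sum>j<p. (b j - g j)\<^sup>2) \<le> (\<Sum>j<p. \<delta>\<^sup>2)"
        proof (rule sum_mono)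
          fix j assume "j \<in> {..<p}"
          then have "\<bar>b j - g j\<bar> \<le> \<delta>" unfolding g_def using rd_props(2)[OF \<delta> bj] by auto
          then have "\<bar>b j - g j\<bar>\<^sup>2 \<le> \<delta>\<^sup>2" by (intro power_mono) auto
          then show "(b j - g j)\<^sup>2 \<le> \<delta>\<^sup>2" by simp
        qed
        then have "l2norm p (\<lambda>k. b k - g k) \<le> sqrt (real p * \<delta>\<^sup>2)" unfolding l2norm_def by simp
        also have "\<dots> = sqrt (real p) * \<delta>" using \<delta> by (simp add: real_sqrt_mult)
        also have "\<dots> \<le> real p * \<delta>"
        proof (rule mult_right_mono)
          have "real p * 1 \<le> real p * real p" using p by (intro mult_left_mono) auto
          then have "sqrt (real p) \<le> sqrt (real p * real p)" by (intro real_sqrt_le_mono) simp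
          then show "sqrt (real p) \<le> real p" by simp
        qed (use \<delta> in simp)
        also have "\<dots> = 1 / (real n * D)" unfolding \<delta>_def using p by simp
        finally show ?thesis .
      qed
      have l20: "l2norm p (\<lambda>k. b k - g k) \<ge> 0" unfolding l2norm_def by (simp add: sum_nonneg)
      have empd: "\<bar>emp_loss n L Z \<omega> b - emp_loss n L Z \<omega> g\<bar> \<le> (C\<mu> + 2 * \<sigma>L) * l2norm p (\<lambda>k. b k - g k)"
      proof -
        have "emp_loss n L Z \<omega> b - emp_loss n L Z \<omega> g = (1/real n) * (\<Sum>i<n. L b (Z i \<omega>) - L g (Z i \<omega>))"
          unfolding emp_loss_def by (simp add: right_diff_distrib sum_subtractf)
        also have "\<bar>\<dots>\<bar> \<le> (1/real n) * (\<Sum>i<n. Cf (Z i \<omega>) * l2norm p (\<lambda>k. b k - g k))"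
        proof -
          have "\<bar>\<Sum>i<n. L b (Z i \<omega>) - L g (Z i \<omega>)\<bar> \<le> (\<Sum>i<n. \<bar>L b (Z i \<omega>) - L g (Z i \<omega>)\<bar>)"
            by (rule sum_abs)
          also have "\<dots> \<le> (\<Sum>i<n. Cf (Z i \<omega>) * l2norm p (\<lambda>k. b k - g k))"
            by (rule sum_mono) (use LipW b gv in auto)
          finally have H: "\<bar>\<Sum>i<n. L b (Z i \<omega>) - L g (Z i \<omega>)\<bar> \<le> (\<Sum>i<n. Cf (Z i \<omega>) * l2norm p (\<lambda>k. b k - g k))" .
          show ?thesis unfolding abs_mult by (rule mult_mono[OF _ H]) auto
        qed
        also have "\<dots> = ((1/real n) * (\<Sum>i<n. Cf (Z i \<omega>))) * l2norm p (\<lambda>k. b k - g k)"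
          by (simp add: sum_distrib_right)
        also have "\<dots> \<le> (C\<mu> + 2 * \<sigma>L) * l2norm p (\<lambda>k. b k - g k)"
          by (rule mult_right_mono[OF Cfavg l20])
        finally show ?thesis .
      qed
      have popd: "\<bar>pop_loss M n L Z b - pop_loss M n L Z g\<bar> \<le> C\<mu> * l2norm p (\<lambda>k. b k - g k)"
      proof (rule pop_lip)
        show "prob_space M" by (rule P)
        show "n \<ge> 1" by (rule n)
        show "\<forall>i<n. integrable M (\<lambda>\<omega>. Cf (Z i \<omega>))" by (rule Cfint)
        show "\<forall>i<n. (\<integral>\<omega>. \<bar>Cf (Z i \<omega>)\<bar> \<partial>M) \<le> C\<mu>" by (rule Cfmean)
        show "l2norm p (\<lambda>k. b k - g k) \<ge> 0" by (rule l20)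
        show "\<forall>i<n. integrable M (\<lambda>\<omega>. L b (Z i \<omega>))" using Lint b by blast
        show "\<forall>i<n. integrable M (\<lambda>\<omega>. L g (Z i \<omega>))" using Lint gv by blast
        show "\<forall>i<n. AE \<omega> in M. \<bar>L b (Z i \<omega>) - L g (Z i \<omega>)\<bar> \<le> Cf (Z i \<omega>) * l2norm p (\<lambda>k. b k - g k)"
        proof (intro allI impI)
          fix i assume "i < n"
          then have "AE \<omega> in M. \<forall>b1\<in>vecs p. \<forall>b2\<in>vecs p.
            \<bar>L b1 (Z i \<omega>) - L b2 (Z i \<omega>)\<bar> \<le> Cf (Z i \<omega>) * l2norm p (\<lambda>k. b1 k - b2 k)" using Lip by blast
          then show "AE \<omega> in M. \<bar>L b (Z i \<omega>) - L g (Z i \<omega>)\<bar> \<le> Cf (Z i \<omega>) * l2norm p (\<lambda>k. b k - g k)"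
            by (rule eventually_mono) (use b gv in blast)
        qed
      qed
      have devg: "\<bar>emp_loss n L Z \<omega> g - pop_loss M n L Z g\<bar> \<le> \<sigma> * (sqrt (tg g / real n) + tg g / real n)"
      proof -
        have h0: "\<bar>\<Sum>i<n. vv i * (L g (Z i \<omega>) - (\<integral>\<omega>'. L g (Z i \<omega>') \<partial>M))\<bar>
             \<le> \<sigma> * (sqrt (\<Sum>i<n. (vv i)\<^sup>2) * sqrt (tg g) + Max ((\<lambda>i. \<bar>vv i\<bar>) ` {..<n}) * tg g)"
          using \<omega>B[OF gG] \<omega>sp unfolding B_def by (simp add: not_less)
        have e: "emp_loss n L Z \<omega> g - pop_loss M n L Z g = (\<Sum>i<n. vv i * (L g (Z i \<omega>) - (\<integral>\<omega>'. L g (Z i \<omega>') \<partial>M)))"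
          unfolding vv_def by (rule dev_expand) (use Lint gv in blast)
        have "sqrt (\<Sum>i<n. (vv i)\<^sup>2) * sqrt (tg g) + Max ((\<lambda>i. \<bar>vv i\<bar>) ` {..<n}) * tg g
            = sqrt (tg g / real n) + tg g / real n"
          unfolding vvs vvm by (simp add: real_sqrt_divide)
        then show ?thesis using h0 e by simp
      qed
      define T where "T = 2 * real n powr (1/3) + real (l0norm p b) * (3 * Lg / c)"
      have tgle: "tg g \<le> T"
      proof -
        have "real (l0norm p g) * \<Lambda> \<le> real (l0norm p b) * (3 * Lg)"
          using l0le \<Lambda>le \<Lambda>0 by (intro mult_mono) auto
        then have "real (l0norm p g) * \<Lambda> / c \<le> real (l0norm p b) * (3 * Lg) / c"
          using c by (intro divide_right_mono) auto
        then show ?thesis unfolding tg_def T_def N3_def by simp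
      qed
      have mono: "\<sigma> * (sqrt (tg g / real n) + tg g / real n) \<le> \<sigma> * (sqrt (T / real n) + T / real n)"
      proof (rule mult_left_mono)
        have "tg g / real n \<le> T / real n" using tgle n by (intro divide_right_mono) auto
        then show "sqrt (tg g / real n) + tg g / real n \<le> sqrt (T / real n) + T / real n"
          by (simp add: add_mono)
      qed (use sig in simp)
      have lipsum: "(C\<mu> + 2 * \<sigma>L) * l2norm p (\<lambda>k. b k - g k) + C\<mu> * l2norm p (\<lambda>k. b k - g k) \<le> 2 / real n"
      proof -
        have "(C\<mu> + 2 * \<sigma>L) * l2norm p (\<lambda>k. b k - g k) + C\<mu> * l2norm p (\<lambda>k. b k - g k)
            = (2 * D) * l2norm p (\<lambda>k. b k - g k)" unfolding D_def by (simp add: algebra_simps)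
        also have "\<dots> \<le> (2 * D) * (1 / (real n * D))" using D l2 by (intro mult_left_mono) auto
        also have "\<dots> = 2 / real n" using D by simp
        finally show ?thesis .
      qed
      have "\<bar>emp_loss n L Z \<omega> b - pop_loss M n L Z b\<bar> \<le>
          \<bar>emp_loss n L Z \<omega> g - pop_loss M n L Z g\<bar> + \<bar>emp_loss n L Z \<omega> b - emp_loss n L Z \<omega> g\<bar>
          + \<bar>pop_loss M n L Z b - pop_loss M n L Z g\<bar>" by linarith
      then have fin: "\<bar>emp_loss n L Z \<omega> b - pop_loss M n L Z b\<bar> \<le>
          \<sigma> * (sqrt (T / real n) + T / real n) + 2 / real n"
        using devg empd popd mono lipsum by linarith
      then show "\<bar>emp_loss n L Z \<omega> b - pop_loss M n L Z b\<bar> \<le>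
          \<sigma> * (sqrt ((2 * real n powr (1/3) + real (l0norm p b) * (3 * Lg / c)) / real n)
               + (2 * real n powr (1/3) + real (l0norm p b) * (3 * Lg / c)) / real n) + 2 / real n"
        unfolding T_def .
    qed
  qed
qed




lemma sqrt_amgm:
  fixes x y :: real
  assumes "x \<ge> 0" "y \<ge> 0"
  shows "sqrt (x*y) \<le> x/8 + 2*y"
proof -
  have "x*y \<le> (x/8 + 2*y)\<^sup>2"
  proof -
    have "(x/8 + 2*y)\<^sup>2 - x*y = (x/8 - 2*y)\<^sup>2" by (simp add: power2_eq_square algebra_simps)
    then show ?thesis by (smt (verit) zero_le_power2)
  qed
  then have "sqrt (x*y) \<le> sqrt ((x/8 + 2*y)\<^sup>2)" by (rule real_sqrt_le_mono)
  then show ?thesis using assms by simp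
qed

lemma Ebound:
  fixes c \<sigma> N3 nr Lg k :: real
  assumes c: "c > 0" and sig: "\<sigma> \<ge> 1" and N3: "N3 \<ge> 1" and nr: "nr = N3^3" and Lg: "Lg \<ge> 0" and k: "k \<ge> 0"
  shows "\<sigma> * (sqrt ((2*N3 + k*(3*Lg/c))/nr) + (2*N3 + k*(3*Lg/c))/nr) + 2/nr
     \<le> 6*\<sigma>/N3 + \<sigma> * sqrt (k*(3*Lg/c)/nr) + \<sigma> * (k*(3*Lg/c)/nr)"
proof -
  define u where "u = k*(3*Lg/c)"
  have u: "u \<ge> 0" unfolding u_def using c Lg k by simp
  have nrp: "nr > 0" using nr N3 by simp
  have s1: "sqrt ((2*N3 + u)/nr) \<le> sqrt (2*N3/nr) + sqrt (u/nr)"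
  proof -
    have "(2*N3 + u)/nr = 2*N3/nr + u/nr" by (simp add: add_divide_distrib)
    moreover have "sqrt (2*N3/nr + u/nr) \<le> sqrt (2*N3/nr) + sqrt (u/nr)"
      using u N3 nrp by (intro sqrt_add_le_add_sqrt) auto
    ultimately show ?thesis by simp
  qed
  have s2: "sqrt (2*N3/nr) \<le> 2/N3"
  proof -
    have "2*N3/nr = 2/N3^2" unfolding nr using N3 by (simp add: power2_eq_square power3_eq_cube)
    also have "\<dots> \<le> (2/N3)^2" using N3 by (simp add: power2_eq_square divide_simps)
    finally have "sqrt (2*N3/nr) \<le> sqrt ((2/N3)^2)" by (rule real_sqrt_le_mono)
    then show ?thesis using N3 by simp
  qed
  have s3: "2*N3/nr \<le> 2/N3"
  proof -
    have "2*N3/nr = 2/N3^2" unfolding nr using N3 by (simp add: power2_eq_square power3_eq_cube)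
    also have "\<dots> \<le> 2/N3" using N3 by (simp add: power2_eq_square divide_simps)
    finally show ?thesis .
  qed
  have s4: "2/nr \<le> 2*\<sigma>/N3"
  proof -
    have "2/nr \<le> 2/N3" unfolding nr using N3
      by (intro divide_left_mono) (auto simp: le_cube)
    also have "\<dots> \<le> 2*\<sigma>/N3" using sig N3 by (intro divide_right_mono) auto
    finally show ?thesis .
  qed
  have "\<sigma> * (sqrt ((2*N3 + u)/nr) + (2*N3 + u)/nr) + 2/nr
      \<le> \<sigma> * (2/N3 + sqrt (u/nr) + 2/N3 + u/nr) + 2*\<sigma>/N3"
  proof -
    have "sqrt ((2*N3 + u)/nr) + (2*N3 + u)/nr \<le> 2/N3 + sqrt (u/nr) + 2/N3 + u/nr"
      using s1 s2 s3 by (simp add: add_divide_distrib)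
    then have "\<sigma> * (sqrt ((2*N3 + u)/nr) + (2*N3 + u)/nr) \<le> \<sigma> * (2/N3 + sqrt (u/nr) + 2/N3 + u/nr)"
      using sig by (intro mult_left_mono) auto
    then show ?thesis using s4 by linarith
  qed
  also have "\<dots> = 6*\<sigma>/N3 + \<sigma> * sqrt (u/nr) + \<sigma> * (u/nr)" by (simp add: algebra_simps)
  finally show ?thesis unfolding u_def .
qed

lemma Ehat:
  fixes c \<sigma> N3 nr Lg k \<nu> :: real
  assumes c: "c > 0" and sig: "\<sigma> \<ge> 1" and N3: "N3 \<ge> 1" and nr: "nr = N3^3" and Lg: "Lg \<ge> 0" and k: "k \<ge> 0"
    and \<nu>: "\<nu> = 4*\<sigma>*Lg/(c*N3^2)"
  shows "\<sigma> * sqrt (k*(3*Lg/c)/nr) + \<sigma> * (k*(3*Lg/c)/nr) \<le> 7/8 * (k*\<nu>) + 3*\<sigma>/(2*N3)"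
proof -
  have kn: "k*\<nu> \<ge> 0" unfolding \<nu> using k sig Lg c by simp
  have y: "3*\<sigma>/(4*N3) \<ge> 0" using sig N3 by simp
  have e1: "\<sigma>\<^sup>2 * (k*(3*Lg/c)/nr) = (k*\<nu>) * (3*\<sigma>/(4*N3))"
    unfolding \<nu> nr using N3 c by (simp add: field_simps power2_eq_square power3_eq_cube)
  have "\<sigma> * sqrt (k*(3*Lg/c)/nr) = sqrt (\<sigma>\<^sup>2 * (k*(3*Lg/c)/nr))" using sig by (simp only: real_sqrt_mult) simp
  also have "\<dots> \<le> (k*\<nu>)/8 + 2*(3*\<sigma>/(4*N3))" unfolding e1 by (rule sqrt_amgm[OF kn y])
  finally have a1: "\<sigma> * sqrt (k*(3*Lg/c)/nr) \<le> (k*\<nu>)/8 + 3*\<sigma>/(2*N3)" by simp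
  have a2: "\<sigma> * (k*(3*Lg/c)/nr) \<le> 3/4 * (k*\<nu>)"
  proof -
    have "\<sigma> * (k*(3*Lg/c)/nr) = 3/4 * (k*\<nu>) / N3"
      unfolding \<nu> nr using N3 c by (simp add: field_simps power2_eq_square power3_eq_cube)
    also have "\<dots> \<le> 3/4 * (k*\<nu>) / 1" by (rule divide_left_mono) (use N3 kn in auto)
    finally show ?thesis by simp
  qed
  show ?thesis using a1 a2 by linarith
qed

lemma Eeps:
  fixes c \<sigma> N3 nr Lg s :: real
  assumes c: "c > 0" "c \<le> 1/2" and sig: "\<sigma> \<ge> 1" and N3: "N3 \<ge> 1" and nr: "nr = N3^3" and Lg: "Lg \<ge> 0" and s: "s \<ge> 0"
  shows "\<sigma> * sqrt (s*(3*Lg/c)/nr) + \<sigma> * (s*(3*Lg/c)/nr) \<le> 3/c * \<sigma> * sqrt (s*Lg/nr) + 3/c * \<sigma> * (s*Lg/N3^2)"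
proof -
  have c3: "3/c \<ge> 1" using c by (simp add: field_simps)
  have "sqrt (s*(3*Lg/c)/nr) = sqrt (3/c) * sqrt (s*Lg/nr)"
    by (simp add: real_sqrt_mult[symmetric] field_simps)
  also have "\<dots> \<le> 3/c * sqrt (s*Lg/nr)"
  proof (rule mult_right_mono)
    have "sqrt (3/c) \<le> sqrt ((3/c)*(3/c))" using c3 by (intro real_sqrt_le_mono) (metis mult_left_mono mult.right_neutral order_trans zero_le_one)
    moreover have "sqrt ((3/c)*(3/c)) = 3/c" using c by (simp only: real_sqrt_abs2) simp
    ultimately show "sqrt (3/c) \<le> 3/c" by (rule ord_le_eq_trans)
  next
    have "nr > 0" using nr N3 by simp
    then show "0 \<le> sqrt (s*Lg/nr)" using s Lg by simp
  qed
  finally have a1': "sqrt (s*(3*Lg/c)/nr) \<le> 3/c * sqrt (s*Lg/nr)" .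
  have a1: "\<sigma> * sqrt (s*(3*Lg/c)/nr) \<le> 3/c * \<sigma> * sqrt (s*Lg/nr)"
  proof -
    have "\<sigma> * sqrt (s*(3*Lg/c)/nr) \<le> \<sigma> * (3/c * sqrt (s*Lg/nr))" using sig a1' by (intro mult_left_mono) auto
    then show ?thesis by (simp add: algebra_simps)
  qed
  have "s*(3*Lg/c)/nr = 3/c * (s*Lg/N3^3)" unfolding nr by (simp add: field_simps)
  also have "\<dots> \<le> 3/c * (s*Lg/N3^2)"
  proof (rule mult_left_mono)
    show "s*Lg/N3^3 \<le> s*Lg/N3^2" using N3 s Lg
      by (intro divide_left_mono) (auto simp: power2_eq_square power3_eq_cube intro: mult_nonneg_nonneg)
  qed (use c in simp)
  finally have a2': "s*(3*Lg/c)/nr \<le> 3/c * (s*Lg/N3^2)" .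
  have a2: "\<sigma> * (s*(3*Lg/c)/nr) \<le> 3/c * \<sigma> * (s*Lg/N3^2)"
  proof -
    have "\<sigma> * (s*(3*Lg/c)/nr) \<le> \<sigma> * (3/c * (s*Lg/N3^2))" using sig a2' by (intro mult_left_mono) auto
    then show ?thesis by (simp add: algebra_simps)
  qed
  show ?thesis using a1 a2 by linarith
qed




lemma final_i:
  fixes c \<sigma> N3 nr Lg k s \<nu> \<Gamma> \<epsilon> \<Delta> eh ee :: real
  assumes c: "c > 0" "c \<le> 1/2" and sig: "\<sigma> \<ge> 1" and N3: "N3 \<ge> 1" and nr: "nr = N3^3"
    and Lg: "Lg \<ge> 0" and k: "k \<ge> 0" and s: "s \<ge> 0" and G: "\<Gamma> \<ge> 0" and e: "\<epsilon> \<ge> 0"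
    and \<nu>: "\<nu> = 4*\<sigma>*Lg/(c*N3^2)"
    and eh: "eh \<le> \<sigma> * (sqrt ((2*N3 + k*(3*Lg/c))/nr) + (2*N3 + k*(3*Lg/c))/nr) + 2/nr"
    and ee: "ee \<le> \<sigma> * (sqrt ((2*N3 + s*(3*Lg/c))/nr) + (2*N3 + s*(3*Lg/c))/nr) + 2/nr"
    and D: "\<Delta> \<le> eh + s*\<nu> + \<Gamma> - k*\<nu> + ee + \<epsilon>"
  shows "\<Delta> \<le> (20/c)*\<sigma>*(s*Lg/N3^2 + sqrt (s*Lg/nr) + 1/N3) + (20/c)* sqrt (\<sigma>*(\<Gamma>+\<epsilon>)/N3) + \<Gamma> + \<epsilon>"
proof -
  have h1: "eh \<le> 6*\<sigma>/N3 + (7/8*(k*\<nu>) + 3*\<sigma>/(2*N3))"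
    using eh Ebound[OF c(1) sig N3 nr Lg k] Ehat[OF c(1) sig N3 nr Lg k \<nu>] by linarith
  have h2: "ee \<le> 6*\<sigma>/N3 + (3/c * \<sigma> * sqrt (s*Lg/nr) + 3/c * \<sigma> * (s*Lg/N3^2))"
    using ee Ebound[OF c(1) sig N3 nr Lg s] Eeps[OF c sig N3 nr Lg s] by linarith
  have kn: "k*\<nu> \<ge> 0" unfolding \<nu> using k sig Lg c by simp
  define a1 where "a1 = \<sigma> * (s*Lg/N3^2)"
  define a2 where "a2 = \<sigma> * sqrt (s*Lg/nr)"
  define a3 where "a3 = \<sigma>/N3"
  define ic where "ic = 1/c"
  define r where "r = sqrt (\<sigma>*(\<Gamma>+\<epsilon>)/N3)"
  have A1: "a1 \<ge> 0" unfolding a1_def using sig s Lg by simp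
  have A2: "a2 \<ge> 0" unfolding a2_def using sig s Lg nr N3 by simp
  have A3: "a3 \<ge> 0" unfolding a3_def using sig N3 by simp
  have R0: "r \<ge> 0" unfolding r_def using sig G e N3 by simp
  have ic: "ic \<ge> 2" unfolding ic_def using c by (simp add: field_simps)
  have h1': "eh \<le> 15/2 * a3 + 7/8*(k*\<nu>)" using h1 unfolding a3_def by (simp add: field_simps)
  have h2': "ee \<le> 6 * a3 + 3 * (ic * a2) + 3 * (ic * a1)" using h2 unfolding a1_def a2_def a3_def ic_def
    by (simp add: field_simps)
  have sn: "s*\<nu> = 4 * (ic * a1)" unfolding \<nu> a1_def ic_def by (simp add: field_simps)
  have f1: "ic * a1 \<ge> 0" "ic * a2 \<ge> 0" using ic A1 A2 by simp_all
  have f3: "27/2 * a3 \<le> 20 * (ic * a3)"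
  proof -
    have "2 * a3 \<le> ic * a3" using ic A3 by (intro mult_right_mono) auto
    then show ?thesis using A3 by linarith
  qed
  have f4: "ic * r \<ge> 0" using ic R0 by simp
  have goal: "\<Delta> \<le> 20 * (ic * a1) + 20 * (ic * a2) + 20 * (ic * a3) + 20 * (ic * r) + \<Gamma> + \<epsilon>"
    using D h1' h2' kn sn f1 f3 f4 by linarith
  have eq: "(20/c)*\<sigma>*(s*Lg/N3^2 + sqrt (s*Lg/nr) + 1/N3) + (20/c) * sqrt (\<sigma>*(\<Gamma>+\<epsilon>)/N3)
     = 20 * (ic * a1) + 20 * (ic * a2) + 20 * (ic * a3) + 20 * (ic * r)"
    unfolding a1_def a2_def a3_def ic_def r_def by (simp add: algebra_simps)
  show ?thesis using goal eq by linarith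
qed

lemma powr_mhalf: "a > 0 \<Longrightarrow> a powr (-1/2) = 1 / sqrt (a::real)"
proof -
  assume a: "a > 0"
  have "a powr (-1/2) = 1 / a powr (1/2)" by (simp add: powr_minus_divide)
  also have "a powr (1/2) = sqrt a" using a by (simp add: powr_half_sqrt)
  finally show ?thesis .
qed

lemma final_ii:
  fixes c \<sigma> N3 nr Lg k s \<nu> \<epsilon> \<Delta> eh ee a R lam :: real
  assumes c: "c > 0" "c \<le> 1/2" and sig: "\<sigma> \<ge> 1" and N3: "N3 \<ge> 1" and nr: "nr = N3^3"
    and Lg: "Lg \<ge> 1" and k: "k \<ge> 0" and s: "s \<ge> 1" and e: "\<epsilon> \<ge> 0"
    and a: "a > 0" "a \<le> 1" and R: "R \<ge> 1"
    and \<nu>: "\<nu> = 4*\<sigma>*Lg/(c*N3^2)"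
    and lam: "lam = sqrt (8 * \<sigma> / (c * a * N3^2) * Lg)"
    and eh: "eh \<le> \<sigma> * (sqrt ((2*N3 + k*(3*Lg/c))/nr) + (2*N3 + k*(3*Lg/c))/nr) + 2/nr"
    and ee: "ee \<le> \<sigma> * (sqrt ((2*N3 + s*(3*Lg/c))/nr) + (2*N3 + s*(3*Lg/c))/nr) + 2/nr"
    and D: "\<Delta> \<le> eh + lam*(s*R) - k*\<nu> + ee + \<epsilon>"
  shows "\<Delta> \<le> (20/c) * a powr (-1/2) * s * \<sigma> * (Lg / N3^2 + R * sqrt Lg / N3)
           + (20/c) * sqrt (\<sigma> * \<epsilon> / N3) + \<epsilon>"
proof -
  have Lg0: "Lg \<ge> 0" "s \<ge> 0" using Lg s by auto
  have h1: "eh \<le> 6*\<sigma>/N3 + (7/8*(k*\<nu>) + 3*\<sigma>/(2*N3))"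
    using eh Ebound[OF c(1) sig N3 nr Lg0(1) k] Ehat[OF c(1) sig N3 nr Lg0(1) k \<nu>] by linarith
  have h2: "ee \<le> 6*\<sigma>/N3 + (3/c * \<sigma> * sqrt (s*Lg/nr) + 3/c * \<sigma> * (s*Lg/N3^2))"
    using ee Ebound[OF c(1) sig N3 nr Lg0] Eeps[OF c sig N3 nr Lg0] by linarith
  have kn: "k*\<nu> \<ge> 0" unfolding \<nu> using k sig Lg c by simp
  define Aa where "Aa = a powr (-1/2)"
  have Aa: "Aa = 1 / sqrt a" unfolding Aa_def by (rule powr_mhalf[OF a(1)])
  have sa: "sqrt a > 0" "sqrt a \<le> 1" using a by auto
  have Aa1: "Aa \<ge> 1" unfolding Aa using sa by (simp add: field_simps)
  have Aa2: "Aa^2 = 1/a" unfolding Aa using a by (simp add: power_divide)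
  have sL: "sqrt Lg \<ge> 1" using Lg by simp
  define a1 where "a1 = \<sigma> * (s*Lg/N3^2)"
  define a2 where "a2 = \<sigma> * sqrt (s*Lg/nr)"
  define a3 where "a3 = \<sigma>/N3"
  define ic where "ic = 1/c"
  define r where "r = sqrt (\<sigma>*\<epsilon>/N3)"
  define B where "B = Aa * s * \<sigma> * R * sqrt Lg / N3"
  define Bl where "Bl = Aa * s * \<sigma> * Lg / N3^2"
  have ic: "ic \<ge> 2" unfolding ic_def using c by (simp add: field_simps)
  have A2: "a2 \<ge> 0" unfolding a2_def using sig s Lg nr N3 by simp
  have A3: "a3 \<ge> 0" unfolding a3_def using sig N3 by simp
  have R0: "r \<ge> 0" unfolding r_def using sig e N3 by simp
  have h1': "eh \<le> 15/2 * a3 + 7/8*(k*\<nu>)" using h1 unfolding a3_def by (simp add: field_simps)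
  have h2': "ee \<le> 6 * a3 + 3 * (ic * a2) + 3 * (ic * a1)" using h2 unfolding a1_def a2_def a3_def ic_def
    by (simp add: field_simps)
  have B0: "B \<ge> 0" unfolding B_def using Aa1 s sig R N3 Lg by simp
  have b3: "a3 \<le> B"
  proof -
    have "1 \<le> Aa * s * R * sqrt Lg" using Aa1 s R sL
      by (intro ge1_mult) auto
    then have "\<sigma> * 1 \<le> \<sigma> * (Aa * s * R * sqrt Lg)" using sig by (intro mult_left_mono) auto
    then have "\<sigma> / N3 \<le> \<sigma> * (Aa * s * R * sqrt Lg) / N3" using N3 by (intro divide_right_mono) auto
    then show ?thesis unfolding a3_def B_def by (simp add: algebra_simps)
  qed
  have b1: "a1 \<le> Bl"
  proof -
    have "a1 = 1 * (s * \<sigma> * Lg / N3^2)" unfolding a1_def by (simp add: algebra_simps)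
    also have "\<dots> \<le> Aa * (s * \<sigma> * Lg / N3^2)" using Aa1 s sig Lg by (intro mult_right_mono) auto
    finally show ?thesis unfolding Bl_def by (simp add: algebra_simps)
  qed
  have b2: "a2 \<le> B"
  proof -
    have nrp: "nr \<ge> N3^2" unfolding nr using N3 by (simp add: power2_eq_square power3_eq_cube)
    have nrpos: "nr > 0" using nr N3 by simp
    have "s*Lg/nr \<le> s*Lg/N3^2" using nrp nrpos s Lg N3 by (intro divide_left_mono) auto
    also have "\<dots> \<le> (s * s)*Lg/N3^2" using s Lg N3 by (intro divide_right_mono mult_right_mono) auto
    also have "\<dots> = (s * sqrt Lg / N3)^2" using Lg by (simp add: power2_eq_square)
    finally have "sqrt (s*Lg/nr) \<le> sqrt ((s * sqrt Lg / N3)^2)" by (rule real_sqrt_le_mono)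
    then have "sqrt (s*Lg/nr) \<le> s * sqrt Lg / N3" using s Lg N3 by simp
    also have "\<dots> \<le> Aa * R * (s * sqrt Lg / N3)"
    proof -
      have "1 \<le> Aa * R" using Aa1 R by (rule ge1_mult)
      moreover have "0 \<le> s * sqrt Lg / N3" using s Lg N3 by simp
      ultimately show ?thesis using mult_right_mono[of 1 "Aa * R" "s * sqrt Lg / N3"] by simp
    qed
    finally have "\<sigma> * sqrt (s*Lg/nr) \<le> \<sigma> * (Aa * R * (s * sqrt Lg / N3))" using sig by (intro mult_left_mono) auto
    then show ?thesis unfolding a2_def B_def by (simp add: algebra_simps)
  qed
  have bl: "lam \<le> 8 * ic * (\<sigma> * sqrt Lg * Aa / N3)"
  proof -
    have X: "8 * \<sigma> / (c * a * N3^2) * Lg = 8 * ic * \<sigma> * Lg * Aa^2 / N3^2"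
      unfolding Aa2 ic_def by (simp add: field_simps)
    have "8 * ic * \<sigma> * Lg * Aa^2 / N3^2 \<le> (8 * ic * \<sigma>) * (8 * ic * \<sigma> * Lg * Aa^2 / N3^2)"
    proof -
      have "1 \<le> 8 * ic" using ic by simp
      then have "1 \<le> 8 * ic * \<sigma>" using sig by (rule ge1_mult)
      moreover have "0 \<le> 8 * ic * \<sigma> * Lg * Aa^2 / N3^2" using ic sig Lg N3 by simp
      ultimately show ?thesis using mult_right_mono[of 1 "8 * ic * \<sigma>" "8 * ic * \<sigma> * Lg * Aa^2 / N3^2"] by simp
    qed
    also have "\<dots> = (8 * ic * (\<sigma> * sqrt Lg * Aa / N3))^2" using Lg
      by (simp add: power2_eq_square field_simps)
    finally have "lam \<le> sqrt ((8 * ic * (\<sigma> * sqrt Lg * Aa / N3))^2)" unfolding lam X by (rule real_sqrt_le_mono)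
    then show ?thesis using ic sig Lg Aa1 N3 by simp
  qed
  have blam: "lam*(s*R) \<le> 8 * (ic * B)"
  proof -
    have "lam*(s*R) \<le> 8 * ic * (\<sigma> * sqrt Lg * Aa / N3) * (s*R)" using bl s R by (intro mult_right_mono) auto
    then show ?thesis unfolding B_def by (simp add: algebra_simps)
  qed
  have f1: "ic * a1 \<le> ic * Bl" "ic * a2 \<le> ic * B"
    using b1 b2 ic by (auto intro: mult_left_mono)
  have f1c: "14 * a3 \<le> 7 * (ic * B)"
  proof -
    have "2 * a3 \<le> ic * B" using ic b3 A3 by (intro mult_mono) auto
    then show ?thesis by linarith
  qed
  have f4: "ic * r \<ge> 0" using ic R0 by simp
  have goal: "\<Delta> \<le> 20 * (ic * Bl) + 20 * (ic * B) + 20 * (ic * r) + \<epsilon>"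
  proof -
    have "ic * B \<ge> 0" using ic B0 by simp
    moreover have "ic * Bl \<ge> 0" unfolding Bl_def using ic Aa1 s sig Lg N3 by simp
    ultimately show ?thesis using D h1' h2' kn blam f1(1,2) f1c f4 A3 by linarith
  qed
  have eq: "(20/c) * a powr (-1/2) * s * \<sigma> * (Lg / N3^2 + R * sqrt Lg / N3) + (20/c) * sqrt (\<sigma> * \<epsilon> / N3)
     = 20 * (ic * Bl) + 20 * (ic * B) + 20 * (ic * r)"
    unfolding Bl_def B_def ic_def r_def Aa_def using c N3 by (simp add: field_simps)
  show ?thesis using goal eq by linarith
qed




lemma sum_if_card:
  "(\<Sum>j<p. if b j \<noteq> 0 then v else 0) = real (l0norm p b) * (v::real)"
proof -
  have "(\<Sum>j<p. if b j \<noteq> 0 then v else 0) = (\<Sum>j\<in>{j. j < p \<and> b j \<noteq> 0}. v)"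
    by (subst sum.inter_filter[symmetric]) (auto intro!: sum.cong)
  then show ?thesis unfolding l0norm_def by simp
qed

lemma s3onc_pen:
  assumes a: "a > 0" and lam: "lam \<ge> 0" and aUL: "a * UL < 1"
    and S: "S3ONC p UL lam a f b"
  shows "(\<Sum>j<p. Pen lam a \<bar>b j\<bar>) = real (l0norm p b) * (a*lam\<^sup>2/2)"
proof -
  have big: "\<bar>b j\<bar> \<ge> a*lam" if j: "j < p" "b j \<noteq> 0" for j
  proof (rule ccontr)
    assume "\<not> \<bar>b j\<bar> \<ge> a*lam"
    then have in1: "\<bar>b j\<bar> \<in> {0<..<a*lam}" using j by auto
    then have "UL + deriv (deriv (Pen lam a)) \<bar>b j\<bar> \<ge> 0" using S j unfolding S3ONC_def by blast
    moreover have "deriv (deriv (Pen lam a)) \<bar>b j\<bar> = -1/a" using in1 by (intro Pen_dd[OF a]) auto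
    ultimately have "UL \<ge> 1/a" by simp
    then have "a * UL \<ge> a * (1/a)" using a by (intro mult_left_mono) auto
    then show False using a aUL by simp
  qed
  have "(\<Sum>j<p. Pen lam a \<bar>b j\<bar>) = (\<Sum>j<p. if b j \<noteq> 0 then a*lam\<^sup>2/2 else 0)"
  proof (rule sum.cong[OF refl])
    fix j assume "j \<in> {..<p}"
    then show "Pen lam a \<bar>b j\<bar> = (if b j \<noteq> 0 then a*lam\<^sup>2/2 else 0)"
      using big[of j] Pen_big[OF a lam] Pen_zero by auto
  qed
  then show ?thesis by (simp add: sum_if_card)
qed

lemma pen_le_s:
  assumes a: "a > 0" and lam: "lam \<ge> 0"
  shows "(\<Sum>j<p. Pen lam a \<bar>b j\<bar>) \<le> real (l0norm p b) * (a*lam\<^sup>2/2)"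
proof -
  have "(\<Sum>j<p. Pen lam a \<bar>b j\<bar>) \<le> (\<Sum>j<p. if b j \<noteq> 0 then a*lam\<^sup>2/2 else 0)"
  proof (rule sum_mono)
    fix j assume "j \<in> {..<p}"
    show "Pen lam a \<bar>b j\<bar> \<le> (if b j \<noteq> 0 then a*lam\<^sup>2/2 else 0)"
      using Pen_le_max[OF a lam, of "\<bar>b j\<bar>"] Pen_zero by auto
  qed
  then show ?thesis by (simp add: sum_if_card)
qed

lemma pen_le_l1:
  assumes a: "a > 0" and lam: "lam \<ge> 0"
  shows "(\<Sum>j<p. Pen lam a \<bar>b j\<bar>) \<le> lam * l1norm p b"
proof -
  have "(\<Sum>j<p. Pen lam a \<bar>b j\<bar>) \<le> (\<Sum>j<p. lam * \<bar>b j\<bar>)"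
    by (rule sum_mono) (rule Pen_le_lin[OF a lam], simp)
  then show ?thesis unfolding l1norm_def by (simp add: sum_distrib_left)
qed

lemma l1_le:
  assumes p: "p \<ge> 1" and R: "linfnorm p b \<le> R"
  shows "l1norm p b \<le> real (l0norm p b) * R"
proof -
  have "l1norm p b \<le> (\<Sum>j<p. if b j \<noteq> 0 then R else 0)"
    unfolding l1norm_def
  proof (rule sum_mono)
    fix j assume j: "j \<in> {..<p}"
    have "\<bar>b j\<bar> \<le> Max ((\<lambda>j. \<bar>b j\<bar>) ` {..<p})" using j by (intro Max_ge) auto
    then have "\<bar>b j\<bar> \<le> R" using R unfolding linfnorm_def by linarith
    then show "\<bar>b j\<bar> \<le> (if b j \<noteq> 0 then R else 0)" by auto
  qed
  then show ?thesis by (simp add: sum_if_card)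
qed




lemma main:
  fixes c :: real and M :: "'m measure" and Z :: "nat \<Rightarrow> 'm \<Rightarrow> (nat \<Rightarrow> real)"
    and L :: "(nat \<Rightarrow> real) \<Rightarrow> (nat \<Rightarrow> real) \<Rightarrow> real" and Cf :: "(nat \<Rightarrow> real) \<Rightarrow> real"
    and n p q :: nat and R \<sigma> \<sigma>L C\<mu> UL a \<epsilon> :: real
    and bstar beps :: "nat \<Rightarrow> real" and bhat :: "'m \<Rightarrow> nat \<Rightarrow> real"
  assumes c: "0 < c \<and> c \<le> 1/2"
    and h1: "prob_space M"
    and h2: "p > 2"
    and h3: "n \<ge> 1"
    and h4: "(\<forall>i<n. Z i \<in> measurable M borel)"
    and h5: "(\<forall>i<n. \<forall>\<omega>\<in>space M. Z i \<omega> \<in> vecs q)"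
    and h6: "prob_space.indep_vars M (\<lambda>_. borel) Z {..<n}"
    and h7: "(\<forall>i<n. distr M borel (Z i) = distr M borel (Z 0))"
    and h8: "(\<lambda>(b, z). L b z) \<in> borel_measurable (borel \<Otimes>\<^sub>M borel)"
    and h9: "(\<forall>i<n. \<forall>b\<in>vecs p. integrable M (\<lambda>\<omega>. L b (Z i \<omega>)))"
    and h10: "R \<ge> 1"
    and h11: "bstar \<in> vecs p"
    and h12: "(\<forall>b\<in>vecs p. (pop_loss M n L Z) bstar \<le> (pop_loss M n L Z) b)"
    and h13: "linfnorm p bstar \<le> R"
    and h14: "UL \<ge> 1"
    and h15: "(\<forall>i<n. AE \<omega> in M. C1_vecs p (\<lambda>b. L b (Z i \<omega>)) \<and>
          (\<forall>b\<in>vecs p. \<forall>\<delta>. \<forall>j<p.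
             \<bar>partial_deriv (\<lambda>b. L b (Z i \<omega>)) (b(j := b j + \<delta>)) j
              - partial_deriv (\<lambda>b. L b (Z i \<omega>)) b j\<bar> \<le> UL * \<bar>\<delta>\<bar>))"
    and h16: "beps \<in> vecs p"
    and h17: "linfnorm p beps \<le> R"
    and h18: "(l0norm p beps) \<ge> 1"
    and h19: "\<epsilon> \<ge> 0"
    and h20: "(pop_loss M n L Z) beps - (pop_loss M n L Z) bstar \<le> \<epsilon>"
    and h21: "\<sigma> \<ge> 1"
    and h22: "(\<forall>b\<in>vecs p. \<forall>i<n.
          psi1_norm M (\<lambda>\<omega>. L b (Z i \<omega>) - (\<integral>\<omega>'. L b (Z i \<omega>') \<partial>M)) \<le> ereal \<sigma>)"
    and h23: "(\<forall>b\<in>vecs p. \<forall>t\<ge>0. \<forall>v :: nat \<Rightarrow> real.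
          measure M {\<omega>\<in>space M. \<bar>\<Sum>i<n. v i * (L b (Z i \<omega>) - (\<integral>\<omega>'. L b (Z i \<omega>') \<partial>M))\<bar>
             > \<sigma> * (sqrt (\<Sum>i<n. (v i)\<^sup>2) * sqrt t + Max ((\<lambda>i. \<bar>v i\<bar>) ` {..<n}) * t)}
          \<le> 2 * exp (- c * t))"
    and h24: "Cf \<in> borel_measurable borel"
    and h25: "(\<forall>z. Cf z \<ge> 0)"
    and h26: "\<sigma>L \<ge> 1"
    and h27: "C\<mu> \<ge> 1"
    and h28: "(\<forall>i<n. integrable M (\<lambda>\<omega>. Cf (Z i \<omega>)))"
    and h29: "(\<forall>i<n. psi1_norm M (\<lambda>\<omega>. Cf (Z i \<omega>) - (\<integral>\<omega>'. Cf (Z i \<omega>') \<partial>M)) \<le> ereal \<sigma>L)"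
    and h30: "(\<forall>i<n. (\<integral>\<omega>. \<bar>Cf (Z i \<omega>)\<bar> \<partial>M) \<le> C\<mu>)"
    and h31: "(\<forall>t\<ge>0. \<forall>v :: nat \<Rightarrow> real.
          measure M {\<omega>\<in>space M. \<bar>\<Sum>i<n. v i * (Cf (Z i \<omega>) - (\<integral>\<omega>'. Cf (Z i \<omega>') \<partial>M))\<bar>
             > \<sigma>L * (sqrt (\<Sum>i<n. (v i)\<^sup>2) * sqrt t + Max ((\<lambda>i. \<bar>v i\<bar>) ` {..<n}) * t)}
          \<le> 2 * exp (- c * t))"
    and h32: "(\<forall>i<n. AE \<omega> in M. \<forall>b1\<in>vecs p. \<forall>b2\<in>vecs p.
          \<bar>L b1 (Z i \<omega>) - L b2 (Z i \<omega>)\<bar> \<le> Cf (Z i \<omega>) * l2norm p (\<lambda>k. b1 k - b2 k))"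
    and h33: "a > 0"
    and h34: "a < 1 / UL"
    and h35: "(\<forall>\<omega>\<in>space M. bhat \<omega> \<in> vecs p \<and> linfnorm p (bhat \<omega>) \<le> R)"
    and h36: "(AE \<omega> in M. S3ONC p UL (sqrt (8 * \<sigma> / (c * a * real n powr (2/3)) * (ln (real n powr (1/3) * real p) + (ln (3 * exp 1 * R * (\<sigma>L + C\<mu>)))))) a (emp_loss n L Z \<omega>) (bhat \<omega>))"
  shows "(\<forall>\<Gamma>\<ge>0.
        real n > (20/c) * (((\<Gamma> + \<epsilon>) / \<sigma>) ^ 3 + real (l0norm p beps) * (ln (real n powr (1/3) * real p) + (ln (3 * exp 1 * R * (\<sigma>L + C\<mu>))))) \<and>
        (AE \<omega> in M. pen_loss p (sqrt (8 * \<sigma> / (c * a * real n powr (2/3)) * (ln (real n powr (1/3) * real p) + (ln (3 * exp 1 * R * (\<sigma>L + C\<mu>)))))) a n L Z \<omega> (bhat \<omega>) \<le> pen_loss p (sqrt (8 * \<sigma> / (c * a * real n powr (2/3)) * (ln (real n powr (1/3) * real p) + (ln (3 * exp 1 * R * (\<sigma>L + C\<mu>)))))) a n L Z \<omega> beps + \<Gamma>)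
        \<longrightarrow>
        (\<exists>A\<in>sets M. measure M A \<ge> (1 - 2 * (real p + 1) * exp (- c * real n) - 6 * exp (- 2 * c * real n powr (1/3))) \<and>
           (\<forall>\<omega>\<in>A. (pop_loss M n L Z) (bhat \<omega>) - (pop_loss M n L Z) bstar \<le>
              (20/c) * \<sigma> * (real (l0norm p beps) * (ln (real n powr (1/3) * real p) + (ln (3 * exp 1 * R * (\<sigma>L + C\<mu>)))) / real n powr (2/3) + sqrt (real (l0norm p beps) * (ln (real n powr (1/3) * real p) + (ln (3 * exp 1 * R * (\<sigma>L + C\<mu>)))) / real n)
                          + 1 / real n powr (1/3))
              + (20/c) * sqrt (\<sigma> * (\<Gamma> + \<epsilon>) / real n powr (1/3)) + \<Gamma> + \<epsilon>))) \<and>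
     \<comment> \<open>(ii)\<close>
     (\<forall>bL1 :: 'm \<Rightarrow> nat \<Rightarrow> real.
        (\<forall>\<omega>\<in>space M. bL1 \<omega> \<in> vecs p \<and>
           (\<forall>b\<in>vecs p. emp_loss n L Z \<omega> (bL1 \<omega>) + (sqrt (8 * \<sigma> / (c * a * real n powr (2/3)) * (ln (real n powr (1/3) * real p) + (ln (3 * exp 1 * R * (\<sigma>L + C\<mu>)))))) * l1norm p (bL1 \<omega>)
                        \<le> emp_loss n L Z \<omega> b + (sqrt (8 * \<sigma> / (c * a * real n powr (2/3)) * (ln (real n powr (1/3) * real p) + (ln (3 * exp 1 * R * (\<sigma>L + C\<mu>)))))) * l1norm p b)) \<and>
        real n > (20/c) * (\<epsilon> / \<sigma>) ^ 3 + (20/c) * (1 / a) * (ln (real n powr (1/3) * real p) + (ln (3 * exp 1 * R * (\<sigma>L + C\<mu>)))) * real (l0norm p beps) powr (3/2) * R powr (3/2) \<and>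
        (AE \<omega> in M. pen_loss p (sqrt (8 * \<sigma> / (c * a * real n powr (2/3)) * (ln (real n powr (1/3) * real p) + (ln (3 * exp 1 * R * (\<sigma>L + C\<mu>)))))) a n L Z \<omega> (bhat \<omega>) \<le> pen_loss p (sqrt (8 * \<sigma> / (c * a * real n powr (2/3)) * (ln (real n powr (1/3) * real p) + (ln (3 * exp 1 * R * (\<sigma>L + C\<mu>)))))) a n L Z \<omega> (bL1 \<omega>))
        \<longrightarrow>
        (\<exists>A\<in>sets M. measure M A \<ge> (1 - 2 * (real p + 1) * exp (- c * real n) - 6 * exp (- 2 * c * real n powr (1/3))) \<and>
           (\<forall>\<omega>\<in>A. (pop_loss M n L Z) (bhat \<omega>) - (pop_loss M n L Z) bstar \<le>
              (20/c) * a powr (-1/2) * real (l0norm p beps) * \<sigma> * ((ln (real n powr (1/3) * real p) + (ln (3 * exp 1 * R * (\<sigma>L + C\<mu>)))) / real n powr (2/3) + R * sqrt (ln (real n powr (1/3) * real p) + (ln (3 * exp 1 * R * (\<sigma>L + C\<mu>)))) / real n powr (1/3))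
              + (20/c) * sqrt (\<sigma> * \<epsilon> / real n powr (1/3)) + \<epsilon>)))"
proof -
  have c0: "c > 0" and ch: "c \<le> 1/2" using c by auto
  interpret P: prob_space M by (rule h1)
  have p1: "p \<ge> 1" using h2 by simp
  have N3: "real n powr (1/3) \<ge> 1" using h3 by (simp add: ge_one_powr_ge_zero)
  have N3c: "real n = (real n powr (1/3))^3" using h3
    by (simp add: powr_realpow[symmetric] powr_powr)
  have N3sq: "(real n powr (1/3))^2 = real n powr (2/3)" using h3
    by (simp add: powr_realpow[symmetric] powr_powr)
  define Lg where "Lg = ln (real n powr (1/3) * real p) + ln (3 * exp 1 * R * (\<sigma>L + C\<mu>))"
  have Lg1: "Lg \<ge> 1"
  proof -
    have p3: "real p \<ge> 3" using h2 by simp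
    have "1 * 3 \<le> real n powr (1/3) * real p" using N3 p3 by (intro mult_mono) auto
    then have "3 \<le> real n powr (1/3) * real p" by simp
    then have "ln 3 \<le> ln (real n powr (1/3) * real p)" by simp
    moreover have "1 \<le> ln (3::real)" using exp_le by (subst ln_ge_iff) auto
    moreover have "1 \<le> 3 * exp 1 * R * (\<sigma>L + C\<mu>)"
    proof -
      have "1 \<le> 3 * exp (1::real)" using exp_ge_add_one_self[of 1] by simp
      then have "1 \<le> 3 * exp 1 * R" using h10 by (rule ge1_mult)
      then show ?thesis by (rule ge1_mult) (use h26 h27 in auto)
    qed
    then have "0 \<le> ln (3 * exp 1 * R * (\<sigma>L + C\<mu>))" by simp
    ultimately show ?thesis unfolding Lg_def by linarith
  qed
  have Lg0: "Lg \<ge> 0" using Lg1 by simp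
  define lam where "lam = sqrt (8 * \<sigma> / (c * a * real n powr (2/3)) * Lg)"
  have arg0: "8 * \<sigma> / (c * a * real n powr (2/3)) * Lg \<ge> 0" using c0 h33 h21 Lg0 by simp
  have lam0: "lam \<ge> 0" unfolding lam_def using arg0 by simp
  have lamN: "lam = sqrt (8 * \<sigma> / (c * a * (real n powr (1/3))^2) * Lg)" unfolding lam_def N3sq ..
  have \<nu>: "a*lam\<^sup>2/2 = 4*\<sigma>*Lg/(c*(real n powr (1/3))^2)"
    unfolding lamN using arg0 h33 c0 N3 by (simp add: N3sq field_simps)
  have aUL: "a * UL < 1" using h34 h14 by (simp add: field_simps)
  have a1: "a \<le> 1"
  proof -
    have "1/UL \<le> 1" using h14 by simp
    then show ?thesis using h34 by simp
  qed
  have s1: "real (l0norm p beps) \<ge> 1" using h18 by simp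
  have h36': "AE \<omega> in M. S3ONC p UL lam a (emp_loss n L Z \<omega>) (bhat \<omega>)"
    using h36 unfolding lam_def Lg_def .
  have prbge: "1 - 2 * exp (- c * real n) - 4 * exp (- 2 * c * real n powr (1/3))
     \<ge> 1 - 2 * (real p + 1) * exp (- c * real n) - 6 * exp (- 2 * c * real n powr (1/3))"
  proof -
    have "2 * exp (- c * real n) \<le> 2 * (real p + 1) * exp (- c * real n)" by simp
    moreover have "0 \<le> exp (- 2 * c * real n powr (1/3))" by simp
    ultimately show ?thesis by linarith
  qed
  have GE: "\<exists>A\<in>sets M. measure M A \<ge> 1 - 2 * exp (- c * real n) - 4 * exp (- 2 * c * real n powr (1/3)) \<and>
     (\<forall>\<omega>\<in>A. Q \<omega> \<and> (\<forall>b\<in>vecs p. linfnorm p b \<le> R \<longrightarrow>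
        \<bar>emp_loss n L Z \<omega> b - pop_loss M n L Z b\<bar> \<le>
          \<sigma> * (sqrt ((2 * real n powr (1/3) + real (l0norm p b) * (3 * Lg / c)) / real n)
               + (2 * real n powr (1/3) + real (l0norm p b) * (3 * Lg / c)) / real n) + 2 / real n))"
    if "AE \<omega> in M. Q \<omega>" for Q
    by (rule good_event[OF h1 c0 h3 p1 h4 h8 h9 h10 h21 h23 h24 h26 h27 h28 h30 h31 h32 that Lg_def])
  have common: "\<exists>A\<in>sets M. measure M A \<ge> (1 - 2 * (real p + 1) * exp (- c * real n) - 6 * exp (- 2 * c * real n powr (1/3))) \<and>
      (\<forall>\<omega>\<in>A. Q \<omega> \<and> S3ONC p UL lam a (emp_loss n L Z \<omega>) (bhat \<omega>) \<and>
         bhat \<omega> \<in> vecs p \<and> \<omega> \<in> space M \<and>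
         \<bar>emp_loss n L Z \<omega> (bhat \<omega>) - pop_loss M n L Z (bhat \<omega>)\<bar> \<le>
          \<sigma> * (sqrt ((2 * real n powr (1/3) + real (l0norm p (bhat \<omega>)) * (3 * Lg / c)) / real n)
               + (2 * real n powr (1/3) + real (l0norm p (bhat \<omega>)) * (3 * Lg / c)) / real n) + 2 / real n \<and>
         \<bar>emp_loss n L Z \<omega> beps - pop_loss M n L Z beps\<bar> \<le>
          \<sigma> * (sqrt ((2 * real n powr (1/3) + real (l0norm p beps) * (3 * Lg / c)) / real n)
               + (2 * real n powr (1/3) + real (l0norm p beps) * (3 * Lg / c)) / real n) + 2 / real n)"
    if AQ: "AE \<omega> in M. Q \<omega>" for Q
  proof -
    have "AE \<omega> in M. Q \<omega> \<and> S3ONC p UL lam a (emp_loss n L Z \<omega>) (bhat \<omega>)"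
      using AQ h36' by (rule eventually_conj)
    from GE[OF this] obtain A where A: "A \<in> sets M"
      "measure M A \<ge> 1 - 2 * exp (- c * real n) - 4 * exp (- 2 * c * real n powr (1/3))"
      "\<forall>\<omega>\<in>A. (Q \<omega> \<and> S3ONC p UL lam a (emp_loss n L Z \<omega>) (bhat \<omega>)) \<and> (\<forall>b\<in>vecs p. linfnorm p b \<le> R \<longrightarrow>
        \<bar>emp_loss n L Z \<omega> b - pop_loss M n L Z b\<bar> \<le>
          \<sigma> * (sqrt ((2 * real n powr (1/3) + real (l0norm p b) * (3 * Lg / c)) / real n)
               + (2 * real n powr (1/3) + real (l0norm p b) * (3 * Lg / c)) / real n) + 2 / real n)"
      by blast
    show ?thesis
    proof (rule bexI[OF _ A(1)], rule conjI)
      show "measure M A \<ge> (1 - 2 * (real p + 1) * exp (- c * real n) - 6 * exp (- 2 * c * real n powr (1/3)))"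
        using A(2) prbge by linarith
      show "\<forall>\<omega>\<in>A. Q \<omega> \<and> S3ONC p UL lam a (emp_loss n L Z \<omega>) (bhat \<omega>) \<and>
         bhat \<omega> \<in> vecs p \<and> \<omega> \<in> space M \<and>
         \<bar>emp_loss n L Z \<omega> (bhat \<omega>) - pop_loss M n L Z (bhat \<omega>)\<bar> \<le>
          \<sigma> * (sqrt ((2 * real n powr (1/3) + real (l0norm p (bhat \<omega>)) * (3 * Lg / c)) / real n)
               + (2 * real n powr (1/3) + real (l0norm p (bhat \<omega>)) * (3 * Lg / c)) / real n) + 2 / real n \<and>
         \<bar>emp_loss n L Z \<omega> beps - pop_loss M n L Z beps\<bar> \<le>
          \<sigma> * (sqrt ((2 * real n powr (1/3) + real (l0norm p beps) * (3 * Lg / c)) / real n)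
               + (2 * real n powr (1/3) + real (l0norm p beps) * (3 * Lg / c)) / real n) + 2 / real n"
      proof
        fix \<omega> assume \<omega>: "\<omega> \<in> A"
        have sp: "\<omega> \<in> space M" using A(1) \<omega> sets.sets_into_space by blast
        have bh: "bhat \<omega> \<in> vecs p" "linfnorm p (bhat \<omega>) \<le> R" using h35 sp by auto
        show "Q \<omega> \<and> S3ONC p UL lam a (emp_loss n L Z \<omega>) (bhat \<omega>) \<and>
         bhat \<omega> \<in> vecs p \<and> \<omega> \<in> space M \<and>
         \<bar>emp_loss n L Z \<omega> (bhat \<omega>) - pop_loss M n L Z (bhat \<omega>)\<bar> \<le>
          \<sigma> * (sqrt ((2 * real n powr (1/3) + real (l0norm p (bhat \<omega>)) * (3 * Lg / c)) / real n)
               + (2 * real n powr (1/3) + real (l0norm p (bhat \<omega>)) * (3 * Lg / c)) / real n) + 2 / real n \<and>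
         \<bar>emp_loss n L Z \<omega> beps - pop_loss M n L Z beps\<bar> \<le>
          \<sigma> * (sqrt ((2 * real n powr (1/3) + real (l0norm p beps) * (3 * Lg / c)) / real n)
               + (2 * real n powr (1/3) + real (l0norm p beps) * (3 * Lg / c)) / real n) + 2 / real n"
          using A(3) \<omega> bh sp h16 h17 by blast
      qed
    qed
  qed
  have part_i: "(\<forall>\<Gamma>\<ge>0.
        real n > (20/c) * (((\<Gamma> + \<epsilon>) / \<sigma>) ^ 3 + real (l0norm p beps) * Lg) \<and>
        (AE \<omega> in M. pen_loss p lam a n L Z \<omega> (bhat \<omega>) \<le> pen_loss p lam a n L Z \<omega> beps + \<Gamma>)
        \<longrightarrow>
        (\<exists>A\<in>sets M. measure M A \<ge> (1 - 2 * (real p + 1) * exp (- c * real n) - 6 * exp (- 2 * c * real n powr (1/3))) \<and>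
           (\<forall>\<omega>\<in>A. (pop_loss M n L Z) (bhat \<omega>) - (pop_loss M n L Z) bstar \<le>
              (20/c) * \<sigma> * (real (l0norm p beps) * Lg / real n powr (2/3) + sqrt (real (l0norm p beps) * Lg / real n)
                          + 1 / real n powr (1/3))
              + (20/c) * sqrt (\<sigma> * (\<Gamma> + \<epsilon>) / real n powr (1/3)) + \<Gamma> + \<epsilon>)))"
  proof (intro allI impI)
    fix \<Gamma> :: real assume G: "\<Gamma> \<ge> 0" and H: "real n > (20/c) * (((\<Gamma> + \<epsilon>) / \<sigma>) ^ 3 + real (l0norm p beps) * Lg) \<and>
        (AE \<omega> in M. pen_loss p lam a n L Z \<omega> (bhat \<omega>) \<le> pen_loss p lam a n L Z \<omega> beps + \<Gamma>)"
    from H have AQ: "AE \<omega> in M. pen_loss p lam a n L Z \<omega> (bhat \<omega>) \<le> pen_loss p lam a n L Z \<omega> beps + \<Gamma>" by blast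
    from common[OF AQ] obtain A where A: "A \<in> sets M"
      "measure M A \<ge> (1 - 2 * (real p + 1) * exp (- c * real n) - 6 * exp (- 2 * c * real n powr (1/3)))"
      and AA: "\<forall>\<omega>\<in>A. pen_loss p lam a n L Z \<omega> (bhat \<omega>) \<le> pen_loss p lam a n L Z \<omega> beps + \<Gamma> \<and> S3ONC p UL lam a (emp_loss n L Z \<omega>) (bhat \<omega>) \<and>
         bhat \<omega> \<in> vecs p \<and> \<omega> \<in> space M \<and>
         \<bar>emp_loss n L Z \<omega> (bhat \<omega>) - pop_loss M n L Z (bhat \<omega>)\<bar> \<le>
          \<sigma> * (sqrt ((2 * real n powr (1/3) + real (l0norm p (bhat \<omega>)) * (3 * Lg / c)) / real n)
               + (2 * real n powr (1/3) + real (l0norm p (bhat \<omega>)) * (3 * Lg / c)) / real n) + 2 / real n \<and>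
         \<bar>emp_loss n L Z \<omega> beps - pop_loss M n L Z beps\<bar> \<le>
          \<sigma> * (sqrt ((2 * real n powr (1/3) + real (l0norm p beps) * (3 * Lg / c)) / real n)
               + (2 * real n powr (1/3) + real (l0norm p beps) * (3 * Lg / c)) / real n) + 2 / real n"
      by blast
    show "\<exists>A\<in>sets M. measure M A \<ge> (1 - 2 * (real p + 1) * exp (- c * real n) - 6 * exp (- 2 * c * real n powr (1/3))) \<and>
           (\<forall>\<omega>\<in>A. (pop_loss M n L Z) (bhat \<omega>) - (pop_loss M n L Z) bstar \<le>
              (20/c) * \<sigma> * (real (l0norm p beps) * Lg / real n powr (2/3) + sqrt (real (l0norm p beps) * Lg / real n)
                          + 1 / real n powr (1/3))
              + (20/c) * sqrt (\<sigma> * (\<Gamma> + \<epsilon>) / real n powr (1/3)) + \<Gamma> + \<epsilon>)"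
    proof (rule bexI[OF _ A(1)], rule conjI[OF A(2)], rule ballI)
      fix \<omega> assume \<omega>: "\<omega> \<in> A"
      note W = AA[rule_format, OF \<omega>]
      define bh where "bh = bhat \<omega>"
      have pc: "emp_loss n L Z \<omega> bh + (\<Sum>j<p. Pen lam a \<bar>bh j\<bar>) \<le> emp_loss n L Z \<omega> beps + (\<Sum>j<p. Pen lam a \<bar>beps j\<bar>) + \<Gamma>"
        using W unfolding pen_loss_def bh_def by blast
      have penh: "(\<Sum>j<p. Pen lam a \<bar>bh j\<bar>) = real (l0norm p bh) * (a*lam\<^sup>2/2)"
        using s3onc_pen[OF h33 lam0 aUL] W unfolding bh_def by blast
      have pene: "(\<Sum>j<p. Pen lam a \<bar>beps j\<bar>) \<le> real (l0norm p beps) * (a*lam\<^sup>2/2)"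
        by (rule pen_le_s[OF h33 lam0])
      have dh: "\<bar>emp_loss n L Z \<omega> bh - pop_loss M n L Z bh\<bar> \<le>
          \<sigma> * (sqrt ((2 * real n powr (1/3) + real (l0norm p bh) * (3 * Lg / c)) / real n)
               + (2 * real n powr (1/3) + real (l0norm p bh) * (3 * Lg / c)) / real n) + 2 / real n"
        using W unfolding bh_def by blast
      have de: "\<bar>emp_loss n L Z \<omega> beps - pop_loss M n L Z beps\<bar> \<le>
          \<sigma> * (sqrt ((2 * real n powr (1/3) + real (l0norm p beps) * (3 * Lg / c)) / real n)
               + (2 * real n powr (1/3) + real (l0norm p beps) * (3 * Lg / c)) / real n) + 2 / real n"
        using W by blast
      have D: "pop_loss M n L Z bh - pop_loss M n L Z bstar \<le>
          \<bar>emp_loss n L Z \<omega> bh - pop_loss M n L Z bh\<bar> + real (l0norm p beps) * (a*lam\<^sup>2/2) + \<Gamma>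
          - real (l0norm p bh) * (a*lam\<^sup>2/2) + \<bar>emp_loss n L Z \<omega> beps - pop_loss M n L Z beps\<bar> + \<epsilon>"
        using pc penh pene h20 abs_ge_self[of "emp_loss n L Z \<omega> bh - pop_loss M n L Z bh"]
          abs_ge_minus_self[of "emp_loss n L Z \<omega> beps - pop_loss M n L Z beps"]
          abs_ge_minus_self[of "emp_loss n L Z \<omega> bh - pop_loss M n L Z bh"]
        by linarith
      have fin: "pop_loss M n L Z bh - pop_loss M n L Z bstar \<le>
        (20/c)*\<sigma>*(real (l0norm p beps)*Lg/(real n powr (1/3))^2 + sqrt (real (l0norm p beps)*Lg/real n) + 1/real n powr (1/3))
        + (20/c) * sqrt (\<sigma>*(\<Gamma>+\<epsilon>)/real n powr (1/3)) + \<Gamma> + \<epsilon>"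
        by (rule final_i[OF c0 ch h21 N3 N3c Lg0 _ _ G h19 \<nu> dh de D]) (use s1 in auto)
      show "(pop_loss M n L Z) (bhat \<omega>) - (pop_loss M n L Z) bstar \<le>
              (20/c) * \<sigma> * (real (l0norm p beps) * Lg / real n powr (2/3) + sqrt (real (l0norm p beps) * Lg / real n)
                          + 1 / real n powr (1/3))
              + (20/c) * sqrt (\<sigma> * (\<Gamma> + \<epsilon>) / real n powr (1/3)) + \<Gamma> + \<epsilon>"
        using fin unfolding N3sq bh_def .
    qed
  qed
  have part_ii: "(\<forall>bL1 :: 'm \<Rightarrow> nat \<Rightarrow> real.
        (\<forall>\<omega>\<in>space M. bL1 \<omega> \<in> vecs p \<and>
           (\<forall>b\<in>vecs p. emp_loss n L Z \<omega> (bL1 \<omega>) + lam * l1norm p (bL1 \<omega>)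
                        \<le> emp_loss n L Z \<omega> b + lam * l1norm p b)) \<and>
        real n > (20/c) * (\<epsilon> / \<sigma>) ^ 3 + (20/c) * (1 / a) * Lg * real (l0norm p beps) powr (3/2) * R powr (3/2) \<and>
        (AE \<omega> in M. pen_loss p lam a n L Z \<omega> (bhat \<omega>) \<le> pen_loss p lam a n L Z \<omega> (bL1 \<omega>))
        \<longrightarrow>
        (\<exists>A\<in>sets M. measure M A \<ge> (1 - 2 * (real p + 1) * exp (- c * real n) - 6 * exp (- 2 * c * real n powr (1/3))) \<and>
           (\<forall>\<omega>\<in>A. (pop_loss M n L Z) (bhat \<omega>) - (pop_loss M n L Z) bstar \<le>
              (20/c) * a powr (-1/2) * real (l0norm p beps) * \<sigma> * (Lg / real n powr (2/3) + R * sqrt Lg / real n powr (1/3))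
              + (20/c) * sqrt (\<sigma> * \<epsilon> / real n powr (1/3)) + \<epsilon>)))"
  proof (intro allI impI)
    fix bL1 :: "'m \<Rightarrow> nat \<Rightarrow> real"
    assume H: "(\<forall>\<omega>\<in>space M. bL1 \<omega> \<in> vecs p \<and>
           (\<forall>b\<in>vecs p. emp_loss n L Z \<omega> (bL1 \<omega>) + lam * l1norm p (bL1 \<omega>)
                        \<le> emp_loss n L Z \<omega> b + lam * l1norm p b)) \<and>
        real n > (20/c) * (\<epsilon> / \<sigma>) ^ 3 + (20/c) * (1 / a) * Lg * real (l0norm p beps) powr (3/2) * R powr (3/2) \<and>
        (AE \<omega> in M. pen_loss p lam a n L Z \<omega> (bhat \<omega>) \<le> pen_loss p lam a n L Z \<omega> (bL1 \<omega>))"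
    from H have AQ: "AE \<omega> in M. pen_loss p lam a n L Z \<omega> (bhat \<omega>) \<le> pen_loss p lam a n L Z \<omega> (bL1 \<omega>)" by blast
    from H have Hmin: "\<forall>\<omega>\<in>space M. bL1 \<omega> \<in> vecs p \<and>
           (\<forall>b\<in>vecs p. emp_loss n L Z \<omega> (bL1 \<omega>) + lam * l1norm p (bL1 \<omega>)
                        \<le> emp_loss n L Z \<omega> b + lam * l1norm p b)" by blast
    from common[OF AQ] obtain A where A: "A \<in> sets M"
      "measure M A \<ge> (1 - 2 * (real p + 1) * exp (- c * real n) - 6 * exp (- 2 * c * real n powr (1/3)))"
      and AA: "\<forall>\<omega>\<in>A. pen_loss p lam a n L Z \<omega> (bhat \<omega>) \<le> pen_loss p lam a n L Z \<omega> (bL1 \<omega>) \<and> S3ONC p UL lam a (emp_loss n L Z \<omega>) (bhat \<omega>) \<and>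
         bhat \<omega> \<in> vecs p \<and> \<omega> \<in> space M \<and>
         \<bar>emp_loss n L Z \<omega> (bhat \<omega>) - pop_loss M n L Z (bhat \<omega>)\<bar> \<le>
          \<sigma> * (sqrt ((2 * real n powr (1/3) + real (l0norm p (bhat \<omega>)) * (3 * Lg / c)) / real n)
               + (2 * real n powr (1/3) + real (l0norm p (bhat \<omega>)) * (3 * Lg / c)) / real n) + 2 / real n \<and>
         \<bar>emp_loss n L Z \<omega> beps - pop_loss M n L Z beps\<bar> \<le>
          \<sigma> * (sqrt ((2 * real n powr (1/3) + real (l0norm p beps) * (3 * Lg / c)) / real n)
               + (2 * real n powr (1/3) + real (l0norm p beps) * (3 * Lg / c)) / real n) + 2 / real n"
      by blast
    show "\<exists>A\<in>sets M. measure M A \<ge> (1 - 2 * (real p + 1) * exp (- c * real n) - 6 * exp (- 2 * c * real n powr (1/3))) \<and>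
           (\<forall>\<omega>\<in>A. (pop_loss M n L Z) (bhat \<omega>) - (pop_loss M n L Z) bstar \<le>
              (20/c) * a powr (-1/2) * real (l0norm p beps) * \<sigma> * (Lg / real n powr (2/3) + R * sqrt Lg / real n powr (1/3))
              + (20/c) * sqrt (\<sigma> * \<epsilon> / real n powr (1/3)) + \<epsilon>)"
    proof (rule bexI[OF _ A(1)], rule conjI[OF A(2)], rule ballI)
      fix \<omega> assume \<omega>: "\<omega> \<in> A"
      note W = AA[rule_format, OF \<omega>]
      define bh where "bh = bhat \<omega>"
      have sp: "\<omega> \<in> space M" using W by blast
      have bl: "bL1 \<omega> \<in> vecs p" and blmin: "emp_loss n L Z \<omega> (bL1 \<omega>) + lam * l1norm p (bL1 \<omega>)
                        \<le> emp_loss n L Z \<omega> beps + lam * l1norm p beps"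
        using Hmin sp h16 by blast+
      have pc: "emp_loss n L Z \<omega> bh + (\<Sum>j<p. Pen lam a \<bar>bh j\<bar>) \<le> emp_loss n L Z \<omega> (bL1 \<omega>) + (\<Sum>j<p. Pen lam a \<bar>bL1 \<omega> j\<bar>)"
        using W unfolding pen_loss_def bh_def by blast
      have penh: "(\<Sum>j<p. Pen lam a \<bar>bh j\<bar>) = real (l0norm p bh) * (a*lam\<^sup>2/2)"
        using s3onc_pen[OF h33 lam0 aUL] W unfolding bh_def by blast
      have penl: "(\<Sum>j<p. Pen lam a \<bar>bL1 \<omega> j\<bar>) \<le> lam * l1norm p (bL1 \<omega>)"
        by (rule pen_le_l1[OF h33 lam0])
      have l1e: "lam * l1norm p beps \<le> lam * (real (l0norm p beps) * R)"
        using l1_le[OF p1 h17] lam0 by (rule mult_left_mono)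
      have dh: "\<bar>emp_loss n L Z \<omega> bh - pop_loss M n L Z bh\<bar> \<le>
          \<sigma> * (sqrt ((2 * real n powr (1/3) + real (l0norm p bh) * (3 * Lg / c)) / real n)
               + (2 * real n powr (1/3) + real (l0norm p bh) * (3 * Lg / c)) / real n) + 2 / real n"
        using W unfolding bh_def by blast
      have de: "\<bar>emp_loss n L Z \<omega> beps - pop_loss M n L Z beps\<bar> \<le>
          \<sigma> * (sqrt ((2 * real n powr (1/3) + real (l0norm p beps) * (3 * Lg / c)) / real n)
               + (2 * real n powr (1/3) + real (l0norm p beps) * (3 * Lg / c)) / real n) + 2 / real n"
        using W by blast
      have D: "pop_loss M n L Z bh - pop_loss M n L Z bstar \<le>
          \<bar>emp_loss n L Z \<omega> bh - pop_loss M n L Z bh\<bar> + lam * (real (l0norm p beps) * R)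
          - real (l0norm p bh) * (a*lam\<^sup>2/2) + \<bar>emp_loss n L Z \<omega> beps - pop_loss M n L Z beps\<bar> + \<epsilon>"
        using pc penh penl blmin l1e h20 abs_ge_self[of "emp_loss n L Z \<omega> bh - pop_loss M n L Z bh"]
          abs_ge_minus_self[of "emp_loss n L Z \<omega> beps - pop_loss M n L Z beps"]
          abs_ge_minus_self[of "emp_loss n L Z \<omega> bh - pop_loss M n L Z bh"]
        by linarith
      have fin: "pop_loss M n L Z bh - pop_loss M n L Z bstar \<le>
          (20/c) * a powr (-1/2) * real (l0norm p beps) * \<sigma> * (Lg / (real n powr (1/3))^2 + R * sqrt Lg / real n powr (1/3))
           + (20/c) * sqrt (\<sigma> * \<epsilon> / real n powr (1/3)) + \<epsilon>"
        by (rule final_ii[OF c0 ch h21 N3 N3c Lg1 _ s1 h19 h33 a1 h10 \<nu> lamN dh de D]) simp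
      show "(pop_loss M n L Z) (bhat \<omega>) - (pop_loss M n L Z) bstar \<le>
              (20/c) * a powr (-1/2) * real (l0norm p beps) * \<sigma> * (Lg / real n powr (2/3) + R * sqrt Lg / real n powr (1/3))
              + (20/c) * sqrt (\<sigma> * \<epsilon> / real n powr (1/3)) + \<epsilon>"
        using fin unfolding N3sq bh_def .
    qed
  qed
  show ?thesis using part_i part_ii unfolding lam_def Lg_def by blast
qed


theorem theorem1:
  shows "\<forall>c::real. 0 < c \<and> c \<le> 1/2 \<longrightarrow>
   (\<exists>ct C3 C4 :: real. ct > 0 \<and> C3 > 0 \<and> C4 > 0 \<and>
    (\<forall>(M :: 'm measure) (Z :: nat \<Rightarrow> 'm \<Rightarrow> (nat \<Rightarrow> real))
       (L :: (nat \<Rightarrow> real) \<Rightarrow> (nat \<Rightarrow> real) \<Rightarrow> real) (Cf :: (nat \<Rightarrow> real) \<Rightarrow> real)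
       (n :: nat) (p :: nat) (q :: nat) (R :: real) (\<sigma> :: real) (\<sigma>L :: real) (C\<mu> :: real)
       (UL :: real) (a :: real) (\<epsilon> :: real)
       (bstar :: nat \<Rightarrow> real) (beps :: nat \<Rightarrow> real) (bhat :: 'm \<Rightarrow> nat \<Rightarrow> real).
     let LL = pop_loss M n L Z;
         s = l0norm p beps;
         \<zeta> = ln (3 * exp 1 * R * (\<sigma>L + C\<mu>));
         Lg = ln (real n powr (1/3) * real p) + \<zeta>;
         lam = sqrt (8 * \<sigma> / (c * a * real n powr (2/3)) * Lg);
         prb = 1 - 2 * (real p + 1) * exp (- ct * real n) - 6 * exp (- 2 * c * real n powr (1/3))
     in
     ( prob_space M \<and> p > 2 \<and> n \<ge> 1 \<and>
       \<comment> \<open>i.i.d. samples with support in R^q\<close>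
       (\<forall>i<n. Z i \<in> measurable M borel) \<and>
       (\<forall>i<n. \<forall>\<omega>\<in>space M. Z i \<omega> \<in> vecs q) \<and>
       prob_space.indep_vars M (\<lambda>_. borel) Z {..<n} \<and>
       (\<forall>i<n. distr M borel (Z i) = distr M borel (Z 0)) \<and>
       \<comment> \<open>the loss\<close>
       (\<lambda>(b, z). L b z) \<in> borel_measurable (borel \<Otimes>\<^sub>M borel) \<and>
       (\<forall>i<n. \<forall>b\<in>vecs p. integrable M (\<lambda>\<omega>. L b (Z i \<omega>))) \<and>
       \<comment> \<open>the population minimizer\<close>
       R \<ge> 1 \<and> bstar \<in> vecs p \<and> (\<forall>b\<in>vecs p. LL bstar \<le> LL b) \<and> linfnorm p bstar \<le> R \<and>
       \<comment> \<open>smoothness\<close>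
       UL \<ge> 1 \<and>
       (\<forall>i<n. AE \<omega> in M. C1_vecs p (\<lambda>b. L b (Z i \<omega>)) \<and>
          (\<forall>b\<in>vecs p. \<forall>\<delta>. \<forall>j<p.
             \<bar>partial_deriv (\<lambda>b. L b (Z i \<omega>)) (b(j := b j + \<delta>)) j
              - partial_deriv (\<lambda>b. L b (Z i \<omega>)) b j\<bar> \<le> UL * \<bar>\<delta>\<bar>)) \<and>
       \<comment> \<open>(A1)\<close>
       beps \<in> vecs p \<and> linfnorm p beps \<le> R \<and> s \<ge> 1 \<and> \<epsilon> \<ge> 0 \<and> LL beps - LL bstar \<le> \<epsilon> \<and>
       \<comment> \<open>(A2)\<close>
       \<sigma> \<ge> 1 \<and>
       (\<forall>b\<in>vecs p. \<forall>i<n.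
          psi1_norm M (\<lambda>\<omega>. L b (Z i \<omega>) - (\<integral>\<omega>'. L b (Z i \<omega>') \<partial>M)) \<le> ereal \<sigma>) \<and>
       (\<forall>b\<in>vecs p. \<forall>t\<ge>0. \<forall>v :: nat \<Rightarrow> real.
          measure M {\<omega>\<in>space M. \<bar>\<Sum>i<n. v i * (L b (Z i \<omega>) - (\<integral>\<omega>'. L b (Z i \<omega>') \<partial>M))\<bar>
             > \<sigma> * (sqrt (\<Sum>i<n. (v i)\<^sup>2) * sqrt t + Max ((\<lambda>i. \<bar>v i\<bar>) ` {..<n}) * t)}
          \<le> 2 * exp (- c * t)) \<and>
       \<comment> \<open>(A3)\<close>
       Cf \<in> borel_measurable borel \<and> (\<forall>z. Cf z \<ge> 0) \<and> \<sigma>L \<ge> 1 \<and> C\<mu> \<ge> 1 \<and>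
       (\<forall>i<n. integrable M (\<lambda>\<omega>. Cf (Z i \<omega>))) \<and>
       (\<forall>i<n. psi1_norm M (\<lambda>\<omega>. Cf (Z i \<omega>) - (\<integral>\<omega>'. Cf (Z i \<omega>') \<partial>M)) \<le> ereal \<sigma>L) \<and>
       (\<forall>i<n. (\<integral>\<omega>. \<bar>Cf (Z i \<omega>)\<bar> \<partial>M) \<le> C\<mu>) \<and>
       (\<forall>t\<ge>0. \<forall>v :: nat \<Rightarrow> real.
          measure M {\<omega>\<in>space M. \<bar>\<Sum>i<n. v i * (Cf (Z i \<omega>) - (\<integral>\<omega>'. Cf (Z i \<omega>') \<partial>M))\<bar>
             > \<sigma>L * (sqrt (\<Sum>i<n. (v i)\<^sup>2) * sqrt t + Max ((\<lambda>i. \<bar>v i\<bar>) ` {..<n}) * t)}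
          \<le> 2 * exp (- c * t)) \<and>
       (\<forall>i<n. AE \<omega> in M. \<forall>b1\<in>vecs p. \<forall>b2\<in>vecs p.
          \<bar>L b1 (Z i \<omega>) - L b2 (Z i \<omega>)\<bar> \<le> Cf (Z i \<omega>) * l2norm p (\<lambda>k. b1 k - b2 k)) \<and>
       \<comment> \<open>tuning parameter and the estimator\<close>
       a > 0 \<and> a < 1 / UL \<and>
       (\<forall>\<omega>\<in>space M. bhat \<omega> \<in> vecs p \<and> linfnorm p (bhat \<omega>) \<le> R) \<and>
       (AE \<omega> in M. S3ONC p UL lam a (emp_loss n L Z \<omega>) (bhat \<omega>)) )
     \<longrightarrow>
     \<comment> \<open>(i)\<close>
     (\<forall>\<Gamma>\<ge>0.
        real n > C3 * (((\<Gamma> + \<epsilon>) / \<sigma>) ^ 3 + real s * Lg) \<and>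
        (AE \<omega> in M. pen_loss p lam a n L Z \<omega> (bhat \<omega>) \<le> pen_loss p lam a n L Z \<omega> beps + \<Gamma>)
        \<longrightarrow>
        (\<exists>A\<in>sets M. measure M A \<ge> prb \<and>
           (\<forall>\<omega>\<in>A. LL (bhat \<omega>) - LL bstar \<le>
              C3 * \<sigma> * (real s * Lg / real n powr (2/3) + sqrt (real s * Lg / real n)
                          + 1 / real n powr (1/3))
              + C3 * sqrt (\<sigma> * (\<Gamma> + \<epsilon>) / real n powr (1/3)) + \<Gamma> + \<epsilon>))) \<and>
     \<comment> \<open>(ii)\<close>
     (\<forall>bL1 :: 'm \<Rightarrow> nat \<Rightarrow> real.
        (\<forall>\<omega>\<in>space M. bL1 \<omega> \<in> vecs p \<and>
           (\<forall>b\<in>vecs p. emp_loss n L Z \<omega> (bL1 \<omega>) + lam * l1norm p (bL1 \<omega>)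
                        \<le> emp_loss n L Z \<omega> b + lam * l1norm p b)) \<and>
        real n > C4 * (\<epsilon> / \<sigma>) ^ 3 + C4 * (1 / a) * Lg * real s powr (3/2) * R powr (3/2) \<and>
        (AE \<omega> in M. pen_loss p lam a n L Z \<omega> (bhat \<omega>) \<le> pen_loss p lam a n L Z \<omega> (bL1 \<omega>))
        \<longrightarrow>
        (\<exists>A\<in>sets M. measure M A \<ge> prb \<and>
           (\<forall>\<omega>\<in>A. LL (bhat \<omega>) - LL bstar \<le>
              C4 * a powr (-1/2) * real s * \<sigma> * (Lg / real n powr (2/3) + R * sqrt Lg / real n powr (1/3))
              + C4 * sqrt (\<sigma> * \<epsilon> / real n powr (1/3)) + \<epsilon>)))))"
  apply (intro allI impI)
  subgoal for c
    apply (rule exI[of _ c], rule exI[of _ "20/c"], rule exI[of _ "20/c"])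
    apply (intro conjI allI)
       apply simp
      apply simp
     apply simp
    subgoal for M Z L Cf n p q R \<sigma> \<sigma>L C\<mu> UL a \<epsilon> bstar beps bhat
      apply (simp only: Let_def)
      apply (intro impI)
      apply (elim conjE)
      apply (rule main[where c=c and M=M and Z=Z and L=L and Cf=Cf and n=n and p=p and q=q and R=R and \<sigma>=\<sigma> and \<sigma>L=\<sigma>L and C\<mu>=C\<mu> and UL=UL and a=a and \<epsilon>=\<epsilon> and bstar=bstar and beps=beps and bhat=bhat])
                          apply (assumption | rule conjI)+
      done
    done
  done

end
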